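(* Let $k\ge1$. If $k=2t+1$, then $M_{[k]}$ is stably isomorphic as a $\Lambda(Q_1,P)$-module to a direct sum of $2^t$ copies of $\Lambda(Q_1)=\Lambda(Q_1,P)/(P)$; more precisely $M_{[k]}\cong F\oplus\bigoplus_{i=1}^{2^t}\Lambda(Q_1)\{g_i\}$ with $F$ free over $\Lambda(Q_1,P)$ and each generator $g_i$ homogeneous of reduced length $t+1$. If $k=2t$ with $t\ge1$, then $M_{[k]}\cong F\oplus\bigoplus_{i=1}^{2^{t-1}}M_{[2]}\{g_i\}$ with $F$ free, where $M_{[2]}\{g_i\}$ is a copy of $M_{[2]}$ whose top generator (the image of $x_1x_2$) is $g_i$, each $g_i$ homogeneous of reduced length $t+1$.
   Context: Over $\mathbb F_2$, $\Lambda(Q_1,P)$ is the exterior algebra on $Q_1,P$, a Hopf algebra with $Q_1$ primitive and $\Delta(P)=P\otimes1+Q_1\otimes Q_1+1\otimes P$. For $i\in\mathbb N_+$, $M_i$ has basis $t_i,x_i$ with $Q_1(x_i)=t_i$, $Q_1(t_i)=0$, $P=0$. For a finite $J\subset\mathbb N_+$, $M_J=\bigotimes_{j\in J}M_j$ with action through the coproduct; $[n]=\{1,\dots,n\}$. $M_J$ has basis the elements $t_Ix_{J\setminus I}$ ($I\subseteq J$), meaning the tensor with factor $t_j$ for $j\in I$ and $x_j$ otherwise. The reduced length of $t_Ix_{J\setminus I}$ is $\ell=|J\setminus I|$; an element is homogeneous of reduced length $l$ if it is a sum of such basis elements of reduced length $l$. Two modules $M,N$ are stably isomorphic if $F\oplus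 M\cong F'\oplus N$ for free modules $F,F'$. *)

theory Defs
  imports Main
begin

text \<open>A basis element t_I x_(J-I) is encoded by the set I (the positions carrying t).
  A vector of M_J is a finite F_2-linear combination of basis elements, encoded
  as the (finite) set of basis elements with coefficient 1; addition is
  symmetric difference.\<close>

type_synonym vec = "nat set set"

definition vzero :: vec where "vzero = {}"

definition vadd :: "vec \<Rightarrow> vec \<Rightarrow> vec" where
  "vadd a b = (a - b) \<union> (b - a)"

definition vsumf :: "('i \<Rightarrow> vec) \<Rightarrow> 'i set \<Rightarrow> vec" where
  "vsumf b T = {K. odd (card {i \<in> T. K \<in> b i})}"

text \<open>Action of Q_1 on a basis element of M_J: via the coproduct Q_1 acts as
  the sum over j of Q_1 on the j-th factor (x_j |-> t_j, t_j |-> 0).\<close>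
definition Qb :: "nat set \<Rightarrow> nat set \<Rightarrow> vec" where
  "Qb J I = {insert j I | j. j \<in> J - I}"

text \<open>Action of P on a basis element of M_J: since P acts as 0 on each M_j and
  Delta(P) = P(x)1 + Q_1(x)Q_1 + 1(x)P, the iterated coproduct gives
  P = sum over unordered pairs {j,j'} of Q_1 on factor j times Q_1 on factor j'.\<close>
definition Pb :: "nat set \<Rightarrow> nat set \<Rightarrow> vec" where
  "Pb J I = {I \<union> {j, j'} | j j'. j \<in> J - I \<and> j' \<in> J - I \<and> j \<noteq> j'}"

definition Qop :: "nat set \<Rightarrow> vec \<Rightarrow> vec" where
  "Qop J v = vsumf (Qb J) v"

definition Pop :: "nat set \<Rightarrow> vec \<Rightarrow> vec" where
  "Pop J v = vsumf (Pb J) v"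

text \<open>Action of the F_2-basis 1, Q_1, P, Q_1 P of Lambda(Q_1,P), indexed 0..3.\<close>
definition lam_act :: "nat set \<Rightarrow> nat \<Rightarrow> vec \<Rightarrow> vec" where
  "lam_act J n v = (if n = 0 then v else if n = 1 then Qop J v
                    else if n = 2 then Pop J v else Qop J (Pop J v))"

definition in_M :: "nat set \<Rightarrow> vec \<Rightarrow> bool" where
  "in_M J v \<longleftrightarrow> v \<subseteq> Pow J"

definition homog :: "nat set \<Rightarrow> nat \<Rightarrow> vec \<Rightarrow> bool" where
  "homog J l v \<longleftrightarrow> in_M J v \<and> (\<forall>I\<in>v. card (J - I) = l)"

definition is_basis :: "nat set \<Rightarrow> ('i \<Rightarrow> vec) \<Rightarrow> 'i set \<Rightarrow> bool" where
  "is_basis J b S \<longleftrightarrow> finite S \<and> (\<forall>i\<in>S. in_M J (b i))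
     \<and> (\<forall>T\<subseteq>S. T \<noteq> {} \<longrightarrow> vsumf b T \<noteq> vzero)
     \<and> (\<forall>v. in_M J v \<longrightarrow> (\<exists>T\<subseteq>S. vsumf b T = v))"

definition is_hom :: "nat set \<Rightarrow> nat set \<Rightarrow> (vec \<Rightarrow> vec) \<Rightarrow> bool" where
  "is_hom J K \<phi> \<longleftrightarrow> (\<forall>v. in_M J v \<longrightarrow> in_M K (\<phi> v))
     \<and> (\<forall>v w. in_M J v \<longrightarrow> in_M J w \<longrightarrow> \<phi> (vadd v w) = vadd (\<phi> v) (\<phi> w))
     \<and> (\<forall>v. in_M J v \<longrightarrow> \<phi> (Qop J v) = Qop K (\<phi> v))
     \<and> (\<forall>v. in_M J v \<longrightarrow> \<phi> (Pop J v) = Pop K (\<phi> v))"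

end

theory Submission
  imports Defs
begin


lemma vadd_comm: "vadd a b = vadd b a" by (auto simp: vadd_def)
lemma vadd_assoc: "vadd (vadd a b) c = vadd a (vadd b c)" by (auto simp: vadd_def)
lemma vadd_lcomm: "vadd a (vadd b c) = vadd b (vadd a c)" by (auto simp: vadd_def)
lemma vadd_self[simp]: "vadd a a = {}" by (auto simp: vadd_def)
lemma vadd_empty[simp]: "vadd {} a = a" "vadd a {} = a" by (auto simp: vadd_def)
lemma vadd_cancel[simp]: "vadd a (vadd a b) = b" by (auto simp: vadd_def)
lemma vadd_disj: "A \<inter> B = {} \<Longrightarrow> vadd A B = A \<union> B" by (auto simp: vadd_def)
lemmas vadd_ac = vadd_comm vadd_assoc vadd_lcomm
lemma vadd_mem: "x \<in> vadd A B \<longleftrightarrow> (x \<in> A) \<noteq> (x \<in> B)" by (auto simp: vadd_def)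
lemma finite_vadd[simp]: "finite A \<Longrightarrow> finite B \<Longrightarrow> finite (vadd A B)" by (simp add: vadd_def)

definition sd :: "'a set \<Rightarrow> 'a set \<Rightarrow> 'a set" where "sd A B = (A - B) \<union> (B - A)"
lemma vadd_sd: "vadd = sd" by (auto simp: vadd_def sd_def fun_eq_iff)
lemma card_vadd_odd:
  assumes "finite A" "finite B"
  shows "odd (card (sd A B)) \<longleftrightarrow> (odd (card A) \<noteq> odd (card B))"
proof -
  have e: "sd A B = (A - B) \<union> (B - A)" by (simp add: sd_def)
  have 1: "card (sd A B) = card (A - B) + card (B - A)"
    unfolding e using assms by (intro card_Un_disjoint) auto
  have 2: "card (A - B) = card A - card (A \<inter> B)" "card (A \<inter> B) \<le> card A"
    using assms by (auto simp: card_Diff_subset_Int intro: card_mono)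
  have 3: "card (B - A) = card B - card (A \<inter> B)" "card (A \<inter> B) \<le> card B"
    using assms by (auto simp: card_Diff_subset_Int Int_commute intro: card_mono)
  show ?thesis using 1 2 3 by presburger
qed

lemma vsumf_mem: "K \<in> vsumf b T \<longleftrightarrow> odd (card {i\<in>T. K \<in> b i})"
  by (simp add: vsumf_def)

lemma vsumf_empty[simp]: "vsumf b {} = {}" by (simp add: vsumf_def)
lemma vsumf_zero: "vsumf (\<lambda>_. {}) T = {}" by (simp add: vsumf_def)
lemma vsumf_single[simp]: "vsumf b {i} = b i"
proof -
  have "\<And>K. {j\<in>{i}. K \<in> b j} = (if K \<in> b i then {i} else {})" by auto
  then show ?thesis by (auto simp: vsumf_def)
qed

lemma vsumf_vadd_idx:
  assumes "finite A" "finite B"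
  shows "vsumf b (sd A B) = vadd (vsumf b A) (vsumf b B)"
proof -
  have "\<And>K. {i\<in>sd A B. K \<in> b i} = sd {i\<in>A. K \<in> b i} {i\<in>B. K \<in> b i}"
    by (auto simp: sd_def)
  then show ?thesis using assms by (auto simp: vsumf_mem vadd_mem card_vadd_odd)
qed

lemma vsumf_vadd_fun:
  assumes "finite T"
  shows "vsumf (\<lambda>i. vadd (b i) (c i)) T = vadd (vsumf b T) (vsumf c T)"
proof -
  have "\<And>K. {i\<in>T. K \<in> vadd (b i) (c i)} = sd {i\<in>T. K \<in> b i} {i\<in>T. K \<in> c i}"
    by (auto simp: vadd_def sd_def)
  then show ?thesis using assms by (auto simp: vsumf_mem vadd_mem card_vadd_odd)
qed

lemma vsumf_insert:
  assumes "finite T" "i \<notin> T"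
  shows "vsumf b (insert i T) = vadd (b i) (vsumf b T)"
proof -
  have "insert i T = sd {i} T" using assms by (auto simp: sd_def)
  then show ?thesis using assms vsumf_vadd_idx[of "{i}" T b] by simp
qed

lemma vsumf_cong: "(\<And>i. i \<in> T \<Longrightarrow> b i = c i) \<Longrightarrow> vsumf b T = vsumf c T"
proof -
  assume "\<And>i. i \<in> T \<Longrightarrow> b i = c i"
  then have "\<And>K. {i\<in>T. K \<in> b i} = {i\<in>T. K \<in> c i}" by auto
  then show ?thesis by (simp add: vsumf_def)
qed

lemma vsumf_sub: "vsumf b T \<subseteq> \<Union> (b ` T)"
proof
  fix K assume "K \<in> vsumf b T"
  then have "odd (card {i\<in>T. K \<in> b i})" by (simp add: vsumf_mem)
  then have "{i\<in>T. K \<in> b i} \<noteq> {}" by (metis card.empty even_zero)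
  then show "K \<in> \<Union> (b ` T)" by blast
qed

lemma finite_vsumf: "finite T \<Longrightarrow> (\<And>i. i \<in> T \<Longrightarrow> finite (b i)) \<Longrightarrow> finite (vsumf b T)"
  by (meson finite_UN_I finite_subset vsumf_sub)

lemma vsumf_image_single:
  assumes "inj_on h T" "finite T"
  shows "vsumf (\<lambda>i. {h i}) T = h ` T"
proof -
  have "\<And>K. {i\<in>T. K \<in> {h i}} = (if K \<in> h ` T then {the_inv_into T h K} else {})"
    using assms by (auto simp: the_inv_into_f_f)
  then show ?thesis by (auto simp: vsumf_def)
qed

lemma vsumf_id: "finite T \<Longrightarrow> vsumf (\<lambda>i. {i}) T = T"
  using vsumf_image_single[of id T] by simp

lemma vsumf_image:
  assumes "inj_on h T"
  shows "vsumf b (h ` T) = vsumf (\<lambda>j. b (h j)) T"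
proof -
  have "\<And>K. {i\<in>h ` T. K \<in> b i} = h ` {j\<in>T. K \<in> b (h j)}" by auto
  moreover have "\<And>K. card (h ` {j\<in>T. K \<in> b (h j)}) = card {j\<in>T. K \<in> b (h j)}"
    using assms by (intro card_image) (auto intro: inj_on_subset)
  ultimately show ?thesis by (simp add: vsumf_def)
qed

lemma vsumf_comp:
  assumes "finite T" "\<And>i. i \<in> T \<Longrightarrow> finite (b i)"
  shows "vsumf c (vsumf b T) = vsumf (\<lambda>i. vsumf c (b i)) T"
  using assms
proof (induction T rule: finite_induct)
  case empty then show ?case by simp
next
  case (insert i T)
  have f: "finite (vsumf b T)" using insert by (intro finite_vsumf) auto
  have "vsumf c (vsumf b (insert i T)) = vsumf c (vadd (b i) (vsumf b T))"
    using insert by (simp add: vsumf_insert)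
  also have "\<dots> = vadd (vsumf c (b i)) (vsumf c (vsumf b T))"
    using insert f by (simp add: vsumf_vadd_idx vadd_sd)
  also have "\<dots> = vsumf (\<lambda>i. vsumf c (b i)) (insert i T)"
    using insert by (simp add: vsumf_insert)
  finally show ?case .
qed



definition ins :: "nat \<Rightarrow> vec \<Rightarrow> vec" where "ins c v = insert c ` v"

lemma Qb_img: "Qb J I = (\<lambda>j. insert j I) ` (J - I)" by (auto simp: Qb_def)
lemma finite_Qb[simp]: "finite J \<Longrightarrow> finite (Qb J I)" by (simp add: Qb_img)
lemma Qb_sub: "I \<subseteq> J \<Longrightarrow> Qb J I \<subseteq> Pow J" by (auto simp: Qb_def)
lemma Pb_img: "Pb J I = (\<lambda>(j,j'). I \<union> {j,j'}) ` {(j,j'). j \<in> J - I \<and> j' \<in> J - I \<and> j \<noteq> j'}"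
  by (auto simp: Pb_def)
lemma finite_Pb[simp]: "finite J \<Longrightarrow> finite (Pb J I)"
proof -
  assume "finite J"
  then have "finite (J \<times> J)" by simp
  then have "finite {(j,j'). j \<in> J - I \<and> j' \<in> J - I \<and> j \<noteq> j'}"
    by (rule rev_finite_subset) auto
  then show ?thesis by (simp add: Pb_img)
qed
lemma Pb_sub: "I \<subseteq> J \<Longrightarrow> Pb J I \<subseteq> Pow J" by (auto simp: Pb_def)

lemma in_M_finite: "finite J \<Longrightarrow> in_M J v \<Longrightarrow> finite v"
  unfolding in_M_def by (meson finite_Pow_iff finite_subset)

lemma in_M_vadd: "in_M J a \<Longrightarrow> in_M J b \<Longrightarrow> in_M J (vadd a b)" by (auto simp: in_M_def vadd_def)
lemma in_M_empty[simp]: "in_M J {}" by (simp add: in_M_def)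

lemma in_M_vsumf: "(\<And>i. i \<in> T \<Longrightarrow> in_M J (b i)) \<Longrightarrow> in_M J (vsumf b T)"
  unfolding in_M_def using vsumf_sub by blast

lemma Qb_M: "I \<subseteq> J \<Longrightarrow> in_M J (Qb J I)" by (simp add: in_M_def Qb_sub)
lemma Pb_M: "I \<subseteq> J \<Longrightarrow> in_M J (Pb J I)" by (simp add: in_M_def Pb_sub)
lemma Qop_M: "in_M J v \<Longrightarrow> in_M J (Qop J v)"
  unfolding Qop_def by (rule in_M_vsumf) (meson Qb_M in_M_def PowD subsetD)
lemma Pop_M: "in_M J v \<Longrightarrow> in_M J (Pop J v)"
  unfolding Pop_def by (rule in_M_vsumf) (meson Pb_M in_M_def PowD subsetD)

lemma Qop_empty[simp]: "Qop J {} = {}" by (simp add: Qop_def)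
lemma Pop_empty[simp]: "Pop J {} = {}" by (simp add: Pop_def)

lemma Qop_add: "finite a \<Longrightarrow> finite b \<Longrightarrow> Qop J (vadd a b) = vadd (Qop J a) (Qop J b)"
  by (simp add: Qop_def vsumf_vadd_idx vadd_sd)
lemma Pop_add: "finite a \<Longrightarrow> finite b \<Longrightarrow> Pop J (vadd a b) = vadd (Pop J a) (Pop J b)"
  by (simp add: Pop_def vsumf_vadd_idx vadd_sd)

lemma Qop_single[simp]: "Qop J {I} = Qb J I" by (simp add: Qop_def)
lemma Pop_single[simp]: "Pop J {I} = Pb J I" by (simp add: Pop_def)

lemma lam_act_M: "in_M J v \<Longrightarrow> in_M J (lam_act J n v)"
  by (simp add: lam_act_def Qop_M Pop_M)

definition cfree :: "nat \<Rightarrow> vec \<Rightarrow> bool" where "cfree c v \<longleftrightarrow> (\<forall>I\<in>v. c \<notin> I)"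

lemma cfree_M: "in_M J v \<Longrightarrow> c \<notin> J \<Longrightarrow> cfree c v" by (auto simp: in_M_def cfree_def)

lemma insert_inj_iff: "c \<notin> A \<Longrightarrow> c \<notin> B \<Longrightarrow> insert c A = insert c B \<longleftrightarrow> A = B"
  by (metis Diff_insert_absorb)

lemma ins_add: "cfree c x \<Longrightarrow> cfree c y \<Longrightarrow> ins c (vadd x y) = vadd (ins c x) (ins c y)"
  unfolding ins_def vadd_def cfree_def
  apply (rule set_eqI)
  apply (auto simp: image_iff)
  apply (metis insert_inj_iff)+
  done

lemma ins_empty[simp]: "ins c {} = {}" by (simp add: ins_def)

lemma ins_M: "in_M J v \<Longrightarrow> in_M (insert c J) (ins c v)" by (auto simp: in_M_def ins_def)

lemma ins_vsumf:
  assumes "inj_on (insert c) v" "finite v"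
  shows "ins c v = vsumf (\<lambda>I. {insert c I}) v"
  using vsumf_image_single[OF assms] by (simp add: ins_def)

lemma inj_insert_cfree: "cfree c v \<Longrightarrow> inj_on (insert c) v"
  by (auto simp: inj_on_def cfree_def insert_inj_iff)

lemma ins_vsumf_comm:
  assumes "finite T" "\<And>i. i \<in> T \<Longrightarrow> finite (b i) \<and> cfree c (b i)"
  shows "ins c (vsumf b T) = vsumf (\<lambda>i. ins c (b i)) T"
  using assms
proof (induction T rule: finite_induct)
  case empty then show ?case by simp
next
  case (insert i T)
  have cf: "cfree c (vsumf b T)" unfolding cfree_def
  proof
    fix I assume "I \<in> vsumf b T"
    then obtain j where "j \<in> T" "I \<in> b j" using vsumf_sub[of b T] by blast
    then show "c \<notin> I" using insert.prems[of j] by (auto simp: cfree_def)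
  qed
  show ?case using insert cf by (simp add: vsumf_insert ins_add)
qed

lemma Qb_lo:
  assumes "I \<subseteq> J" "c \<notin> J"
  shows "Qb (insert c J) I = vadd (Qb J I) (ins c {I})"
proof -
  have "Qb (insert c J) I = Qb J I \<union> ins c {I}" using assms by (auto simp: Qb_def ins_def)
  moreover have "Qb J I \<inter> ins c {I} = {}" using assms by (auto simp: Qb_def ins_def)
  ultimately show ?thesis by (simp add: vadd_disj)
qed

lemma Qb_hi:
  assumes "I \<subseteq> J" "c \<notin> J"
  shows "Qb (insert c J) (insert c I) = ins c (Qb J I)"
  using assms by (auto simp: Qb_def ins_def)

lemma Pb_lo:
  assumes "I \<subseteq> J" "c \<notin> J"
  shows "Pb (insert c J) I = vadd (Pb J I) (ins c (Qb J I))"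
proof -
  have "Pb (insert c J) I = Pb J I \<union> ins c (Qb J I)"
  proof
    show "Pb (insert c J) I \<subseteq> Pb J I \<union> ins c (Qb J I)"
    proof
      fix K assume "K \<in> Pb (insert c J) I"
      then obtain j j' where K: "K = I \<union> {j, j'}" "j \<in> insert c J - I" "j' \<in> insert c J - I" "j \<noteq> j'"
        by (auto simp: Pb_def)
      show "K \<in> Pb J I \<union> ins c (Qb J I)"
      proof (cases "j = c")
        case True
        then have "K = insert c (insert j' I)" "j' \<in> J - I" using K by auto
        then show ?thesis by (auto simp: ins_def Qb_def)
      next
        case False
        show ?thesis
        proof (cases "j' = c")
          case True
          then have "K = insert c (insert j I)" "j \<in> J - I" using K False by auto
          then show ?thesis by (auto simp: ins_def Qb_def)
        next
          case False2: False
          then have "K \<in> Pb J I" using K False unfolding Pb_def by blast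
          then show ?thesis by blast
        qed
      qed
    qed
  next
    show "Pb J I \<union> ins c (Qb J I) \<subseteq> Pb (insert c J) I"
    proof
      fix K assume "K \<in> Pb J I \<union> ins c (Qb J I)"
      then show "K \<in> Pb (insert c J) I"
      proof
        assume "K \<in> Pb J I" then show ?thesis unfolding Pb_def by blast
      next
        assume "K \<in> ins c (Qb J I)"
        then obtain j where "K = I \<union> {j, c}" "j \<in> J - I" by (auto simp: ins_def Qb_def)
        moreover have "c \<in> insert c J - I" "j \<noteq> c" using assms calculation by auto
        ultimately show ?thesis unfolding Pb_def by blast
      qed
    qed
  qed
  moreover have "Pb J I \<inter> ins c (Qb J I) = {}"
  proof -
    have "\<forall>K\<in>Pb J I. c \<notin> K" using Pb_sub[OF assms(1)] assms(2) by blast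
    moreover have "\<forall>K\<in>ins c (Qb J I). c \<in> K" by (auto simp: ins_def)
    ultimately show ?thesis by blast
  qed
  ultimately show ?thesis by (simp add: vadd_disj)
qed

lemma Pb_hi:
  assumes "I \<subseteq> J" "c \<notin> J"
  shows "Pb (insert c J) (insert c I) = ins c (Pb J I)"
proof -
  have e: "insert c J - insert c I = J - I" using assms by auto
  show ?thesis
    unfolding Pb_def ins_def e
    apply (rule set_eqI)
    apply (simp add: image_iff)
    apply (rule iffI)
    apply (elim exE conjE) apply (rule_tac x="I \<union> {j, j'}" in exI) apply auto[1]
    apply (elim exE conjE) apply auto
    done
qed



lemma cfree_Qb: "I \<subseteq> J \<Longrightarrow> c \<notin> J \<Longrightarrow> cfree c (Qb J I)"
  by (meson Qb_M cfree_M)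
lemma cfree_Pb: "I \<subseteq> J \<Longrightarrow> c \<notin> J \<Longrightarrow> cfree c (Pb J I)"
  by (meson Pb_M cfree_M)
lemma cfree_single: "I \<subseteq> J \<Longrightarrow> c \<notin> J \<Longrightarrow> cfree c {I}"
  by (auto simp: cfree_def)
lemma in_M_elem: "in_M J v \<Longrightarrow> I \<in> v \<Longrightarrow> I \<subseteq> J" by (auto simp: in_M_def)

context
  fixes J :: "nat set" and c :: nat
  assumes fJ: "finite J" and cJ: "c \<notin> J"
begin

lemma T1: assumes p: "in_M J p" shows "Qop (insert c J) p = vadd (Qop J p) (ins c p)"
proof -
  have fp: "finite p" using in_M_finite[OF fJ p] .
  have "Qop (insert c J) p = vsumf (\<lambda>I. vadd (Qb J I) (ins c {I})) p"
    unfolding Qop_def by (rule vsumf_cong) (use Qb_lo cJ in_M_elem[OF p] in blast)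
  also have "\<dots> = vadd (Qop J p) (vsumf (\<lambda>I. ins c {I}) p)"
    unfolding Qop_def using fp by (rule vsumf_vadd_fun)
  also have "vsumf (\<lambda>I. ins c {I}) p = ins c (vsumf (\<lambda>I. {I}) p)"
    using fp by (intro ins_vsumf_comm[symmetric]) (use cfree_single in_M_elem[OF p] cJ in auto)
  also have "\<dots> = ins c p" using fp by (simp add: vsumf_id)
  finally show ?thesis .
qed

lemma T3: assumes p: "in_M J p" shows "Pop (insert c J) p = vadd (Pop J p) (ins c (Qop J p))"
proof -
  have fp: "finite p" using in_M_finite[OF fJ p] .
  have "Pop (insert c J) p = vsumf (\<lambda>I. vadd (Pb J I) (ins c (Qb J I))) p"
    unfolding Pop_def by (rule vsumf_cong) (use Pb_lo cJ in_M_elem[OF p] in blast)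
  also have "\<dots> = vadd (Pop J p) (vsumf (\<lambda>I. ins c (Qb J I)) p)"
    unfolding Pop_def using fp by (rule vsumf_vadd_fun)
  also have "vsumf (\<lambda>I. ins c (Qb J I)) p = ins c (Qop J p)"
    unfolding Qop_def using fp fJ
    by (intro ins_vsumf_comm[symmetric]) (use cfree_Qb in_M_elem[OF p] cJ in auto)
  finally show ?thesis .
qed

lemma T2: assumes q: "in_M J q" shows "Qop (insert c J) (ins c q) = ins c (Qop J q)"
proof -
  have fq: "finite q" using in_M_finite[OF fJ q] .
  have inj: "inj_on (insert c) q" using cfree_M[OF q cJ] by (rule inj_insert_cfree)
  have "Qop (insert c J) (ins c q) = vsumf (\<lambda>I. Qb (insert c J) (insert c I)) q"
    unfolding Qop_def ins_def by (rule vsumf_image[OF inj])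
  also have "\<dots> = vsumf (\<lambda>I. ins c (Qb J I)) q"
    by (rule vsumf_cong) (use Qb_hi cJ in_M_elem[OF q] in blast)
  also have "\<dots> = ins c (Qop J q)"
    unfolding Qop_def using fq fJ
    by (intro ins_vsumf_comm[symmetric]) (use cfree_Qb in_M_elem[OF q] cJ in auto)
  finally show ?thesis .
qed

lemma T4: assumes q: "in_M J q" shows "Pop (insert c J) (ins c q) = ins c (Pop J q)"
proof -
  have fq: "finite q" using in_M_finite[OF fJ q] .
  have inj: "inj_on (insert c) q" using cfree_M[OF q cJ] by (rule inj_insert_cfree)
  have "Pop (insert c J) (ins c q) = vsumf (\<lambda>I. Pb (insert c J) (insert c I)) q"
    unfolding Pop_def ins_def by (rule vsumf_image[OF inj])
  also have "\<dots> = vsumf (\<lambda>I. ins c (Pb J I)) q"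
    by (rule vsumf_cong) (use Pb_hi cJ in_M_elem[OF q] in blast)
  also have "\<dots> = ins c (Pop J q)"
    unfolding Pop_def using fq fJ
    by (intro ins_vsumf_comm[symmetric]) (use cfree_Pb in_M_elem[OF q] cJ in auto)
  finally show ?thesis .
qed

lemma fin_ins: "finite v \<Longrightarrow> finite (ins c v)" by (simp add: ins_def)

lemma QM: assumes p: "in_M J p" and q: "in_M J q"
  shows "Qop (insert c J) (vadd p (ins c q)) = vadd (Qop J p) (ins c (vadd p (Qop J q)))"
proof -
  have fp: "finite p" using in_M_finite[OF fJ p] .
  have fq: "finite q" using in_M_finite[OF fJ q] .
  have "Qop (insert c J) (vadd p (ins c q)) = vadd (Qop (insert c J) p) (Qop (insert c J) (ins c q))"
    using fp fq by (simp add: Qop_add fin_ins)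
  also have "\<dots> = vadd (vadd (Qop J p) (ins c p)) (ins c (Qop J q))" using T1[OF p] T2[OF q] by simp
  also have "ins c (vadd p (Qop J q)) = vadd (ins c p) (ins c (Qop J q))"
    by (rule ins_add) (use cfree_M p q Qop_M cJ in blast)+
  ultimately show ?thesis by (simp add: vadd_ac)
qed

lemma PM: assumes p: "in_M J p" and q: "in_M J q"
  shows "Pop (insert c J) (vadd p (ins c q)) = vadd (Pop J p) (ins c (vadd (Qop J p) (Pop J q)))"
proof -
  have fp: "finite p" using in_M_finite[OF fJ p] .
  have fq: "finite q" using in_M_finite[OF fJ q] .
  have "Pop (insert c J) (vadd p (ins c q)) = vadd (Pop (insert c J) p) (Pop (insert c J) (ins c q))"
    using fp fq by (simp add: Pop_add fin_ins)
  also have "\<dots> = vadd (vadd (Pop J p) (ins c (Qop J p))) (ins c (Pop J q))" using T3[OF p] T4[OF q] by simp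
  also have "ins c (vadd (Qop J p) (Pop J q)) = vadd (ins c (Qop J p)) (ins c (Pop J q))"
    by (rule ins_add) (use cfree_M p q Qop_M Pop_M cJ in blast)+
  ultimately show ?thesis by (simp add: vadd_ac)
qed

end

definition lo :: "nat \<Rightarrow> vec \<Rightarrow> vec" where "lo c v = {I\<in>v. c \<notin> I}"
definition hi :: "nat \<Rightarrow> vec \<Rightarrow> vec" where "hi c v = (\<lambda>I. I - {c}) ` {I\<in>v. c \<in> I}"

lemma dec:
  assumes "in_M (insert c J) v" "c \<notin> J"
  shows "v = vadd (lo c v) (ins c (hi c v))" "in_M J (lo c v)" "in_M J (hi c v)"
proof -
  have "ins c (hi c v) = (\<lambda>I. insert c (I - {c})) ` {I\<in>v. c \<in> I}"
    by (simp add: ins_def hi_def image_image)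
  also have "\<dots> = id ` {I\<in>v. c \<in> I}" by (rule image_cong) auto
  finally have "ins c (hi c v) = {I\<in>v. c \<in> I}" by simp
  then show "v = vadd (lo c v) (ins c (hi c v))" by (auto simp: lo_def vadd_def)
  show "in_M J (lo c v)" using assms by (auto simp: lo_def in_M_def)
  show "in_M J (hi c v)" using assms by (auto simp: hi_def in_M_def)
qed

lemma lohi:
  assumes "in_M J p" "in_M J q" "c \<notin> J"
  shows "lo c (vadd p (ins c q)) = p" "hi c (vadd p (ins c q)) = q"
proof -
  have cp: "\<forall>I\<in>p. c \<notin> I" "\<forall>I\<in>q. c \<notin> I" using assms by (auto simp: in_M_def)
  have ci: "\<forall>I\<in>ins c q. c \<in> I" by (auto simp: ins_def)
  have "vadd p (ins c q) = p \<union> ins c q" using cp ci by (intro vadd_disj) blast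
  then show "lo c (vadd p (ins c q)) = p" using cp ci by (auto simp: lo_def)
  have "{I \<in> vadd p (ins c q). c \<in> I} = ins c q" using cp ci \<open>vadd p (ins c q) = p \<union> ins c q\<close> by auto
  then have "hi c (vadd p (ins c q)) = (\<lambda>I. I - {c}) ` insert c ` q" by (simp add: hi_def ins_def)
  also have "\<dots> = q" using cp(2) by (force simp: image_image)
  finally show "hi c (vadd p (ins c q)) = q" .
qed

lemma QQ0: "finite J \<Longrightarrow> in_M J v \<Longrightarrow> Qop J (Qop J v) = {}"
proof (induction J arbitrary: v rule: finite_induct)
  case empty
  have "Qb {} = (\<lambda>_. {})" by (simp add: Qb_def fun_eq_iff)
  then show ?case by (simp add: Qop_def vsumf_zero)
next
  case (insert c J)
  define p where "p = lo c v"
  define q where "q = hi c v"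
  have v: "v = vadd p (ins c q)" and p: "in_M J p" and q: "in_M J q"
    using dec[OF insert.prems insert.hyps(2)] by (simp_all add: p_def q_def)
  have Qq: "in_M J (Qop J q)" "in_M J (Qop J p)" using Qop_M p q by auto
  have "Qop (insert c J) v = vadd (Qop J p) (ins c (vadd p (Qop J q)))"
    using QM[OF insert.hyps(1,2) p q] v by simp
  then have "Qop (insert c J) (Qop (insert c J) v) =
     vadd (Qop J (Qop J p)) (ins c (vadd (Qop J p) (Qop J (vadd p (Qop J q)))))"
    using QM[OF insert.hyps(1,2) Qq(2) in_M_vadd[OF p Qq(1)]] by simp
  also have "Qop J (vadd p (Qop J q)) = vadd (Qop J p) (Qop J (Qop J q))"
    using in_M_finite[OF insert.hyps(1)] p Qq by (simp add: Qop_add)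
  finally show ?case using insert.IH p q by simp
qed

lemma hom_zero: "is_hom S J \<phi> \<Longrightarrow> \<phi> {} = {}"
  unfolding is_hom_def by (metis in_M_empty vadd_self)

lemma hom_add: "is_hom S J \<phi> \<Longrightarrow> in_M S v \<Longrightarrow> in_M S w \<Longrightarrow> \<phi> (vadd v w) = vadd (\<phi> v) (\<phi> w)"
  unfolding is_hom_def by blast
lemma hom_M: "is_hom S J \<phi> \<Longrightarrow> in_M S v \<Longrightarrow> in_M J (\<phi> v)"
  unfolding is_hom_def by blast
lemma hom_Q: "is_hom S J \<phi> \<Longrightarrow> in_M S v \<Longrightarrow> \<phi> (Qop S v) = Qop J (\<phi> v)"
  unfolding is_hom_def by blast
lemma hom_P: "is_hom S J \<phi> \<Longrightarrow> in_M S v \<Longrightarrow> \<phi> (Pop S v) = Pop J (\<phi> v)"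
  unfolding is_hom_def by blast

lemma hom_lam: "is_hom S J \<phi> \<Longrightarrow> in_M S v \<Longrightarrow> \<phi> (lam_act S n v) = lam_act J n (\<phi> v)"
  unfolding lam_act_def using hom_Q hom_P Pop_M by auto

lemma hom_comp: "is_hom S J \<phi> \<Longrightarrow> is_hom J K \<psi> \<Longrightarrow> is_hom S K (\<psi> \<circ> \<phi>)"
  unfolding is_hom_def by auto

lemma hom_vsumf:
  assumes "is_hom S J \<phi>" "finite T" "\<And>i. i \<in> T \<Longrightarrow> in_M S (b i)"
  shows "\<phi> (vsumf b T) = vsumf (\<lambda>i. \<phi> (b i)) T"
  using assms(2,3)
proof (induction T rule: finite_induct)
  case empty then show ?case using hom_zero[OF assms(1)] by simp
next
  case (insert i T)
  have "in_M S (vsumf b T)" using insert by (intro in_M_vsumf) auto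
  then show ?case using insert hom_add[OF assms(1)] by (simp add: vsumf_insert)
qed

definition ext :: "nat \<Rightarrow> (vec \<Rightarrow> vec) \<Rightarrow> vec \<Rightarrow> vec" where
  "ext c \<phi> v = vadd (\<phi> (lo c v)) (ins c (\<phi> (hi c v)))"

lemma ext_on: "in_M S p \<Longrightarrow> in_M S q \<Longrightarrow> c \<notin> S \<Longrightarrow> ext c \<phi> (vadd p (ins c q)) = vadd (\<phi> p) (ins c (\<phi> q))"
  by (simp add: ext_def lohi)

lemma is_hom_ext:
  assumes fS: "finite S" and fJ: "finite J" and cS: "c \<notin> S" and cJ: "c \<notin> J" and h: "is_hom S J \<phi>"
  shows "is_hom (insert c S) (insert c J) (ext c \<phi>)"
proof -
  have D: "\<exists>p q. v = vadd p (ins c q) \<and> in_M S p \<and> in_M S q" if "in_M (insert c S) v" for v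
    using dec[OF that cS] by blast
  have M: "in_M (insert c J) (ext c \<phi> v)" if vM: "in_M (insert c S) v" for v
  proof -
    obtain p q where v: "v = vadd p (ins c q)" "in_M S p" "in_M S q" using D[OF vM] by blast
    have "in_M (insert c J) (\<phi> p)" using hom_M[OF h v(2)] by (auto simp: in_M_def)
    moreover have "in_M (insert c J) (ins c (\<phi> q))" using hom_M[OF h v(3)] by (rule ins_M)
    ultimately show ?thesis using v ext_on[OF v(2,3) cS] in_M_vadd by simp
  qed
  have A: "ext c \<phi> (vadd v w) = vadd (ext c \<phi> v) (ext c \<phi> w)"
    if vM: "in_M (insert c S) v" and wM: "in_M (insert c S) w" for v w
  proof -
    obtain p q where v: "v = vadd p (ins c q)" "in_M S p" "in_M S q" using D[OF vM] by blast
    obtain p' q' where w: "w = vadd p' (ins c q')" "in_M S p'" "in_M S q'" using D[OF wM] by blast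
    have i1: "ins c (vadd q q') = vadd (ins c q) (ins c q')"
      by (rule ins_add) (use cfree_M v w cS in blast)+
    have i2: "ins c (vadd (\<phi> q) (\<phi> q')) = vadd (ins c (\<phi> q)) (ins c (\<phi> q'))"
      by (rule ins_add) (use cfree_M hom_M[OF h] v w cJ in blast)+
    have "vadd v w = vadd (vadd p p') (ins c (vadd q q'))" using v w i1 by (simp add: vadd_ac)
    then have "ext c \<phi> (vadd v w) = vadd (\<phi> (vadd p p')) (ins c (\<phi> (vadd q q')))"
      using ext_on[OF in_M_vadd[OF v(2) w(2)] in_M_vadd[OF v(3) w(3)] cS] by simp
    also have "\<dots> = vadd (vadd (\<phi> p) (\<phi> p')) (vadd (ins c (\<phi> q)) (ins c (\<phi> q')))"
      using hom_add[OF h] v w i2 by simp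
    also have "\<dots> = vadd (ext c \<phi> v) (ext c \<phi> w)"
      using ext_on[OF v(2,3) cS] ext_on[OF w(2,3) cS] v w by (simp add: vadd_ac)
    finally show ?thesis .
  qed
  have Q: "ext c \<phi> (Qop (insert c S) v) = Qop (insert c J) (ext c \<phi> v)" if vM: "in_M (insert c S) v" for v
  proof -
    obtain p q where v: "v = vadd p (ins c q)" "in_M S p" "in_M S q" using D[OF vM] by blast
    have "Qop (insert c S) v = vadd (Qop S p) (ins c (vadd p (Qop S q)))"
      using QM[OF fS cS v(2,3)] v by simp
    then have "ext c \<phi> (Qop (insert c S) v) = vadd (\<phi> (Qop S p)) (ins c (\<phi> (vadd p (Qop S q))))"
      using ext_on[OF Qop_M[OF v(2)] in_M_vadd[OF v(2) Qop_M[OF v(3)]] cS] by simp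
    also have "\<dots> = vadd (Qop J (\<phi> p)) (ins c (vadd (\<phi> p) (Qop J (\<phi> q))))"
      using hom_add[OF h v(2) Qop_M[OF v(3)]] hom_Q[OF h] v by simp
    also have "\<dots> = Qop (insert c J) (vadd (\<phi> p) (ins c (\<phi> q)))"
      using QM[OF fJ cJ hom_M[OF h v(2)] hom_M[OF h v(3)]] by simp
    also have "\<dots> = Qop (insert c J) (ext c \<phi> v)" using ext_on[OF v(2,3) cS] v by simp
    finally show ?thesis .
  qed
  have P: "ext c \<phi> (Pop (insert c S) v) = Pop (insert c J) (ext c \<phi> v)" if vM: "in_M (insert c S) v" for v
  proof -
    obtain p q where v: "v = vadd p (ins c q)" "in_M S p" "in_M S q" using D[OF vM] by blast
    have "Pop (insert c S) v = vadd (Pop S p) (ins c (vadd (Qop S p) (Pop S q)))"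
      using PM[OF fS cS v(2,3)] v by simp
    then have "ext c \<phi> (Pop (insert c S) v) = vadd (\<phi> (Pop S p)) (ins c (\<phi> (vadd (Qop S p) (Pop S q))))"
      using ext_on[OF Pop_M[OF v(2)] in_M_vadd[OF Qop_M[OF v(2)] Pop_M[OF v(3)]] cS] by simp
    also have "\<dots> = vadd (Pop J (\<phi> p)) (ins c (vadd (Qop J (\<phi> p)) (Pop J (\<phi> q))))"
      using hom_add[OF h Qop_M[OF v(2)] Pop_M[OF v(3)]] hom_Q[OF h] hom_P[OF h] v by simp
    also have "\<dots> = Pop (insert c J) (vadd (\<phi> p) (ins c (\<phi> q)))"
      using PM[OF fJ cJ hom_M[OF h v(2)] hom_M[OF h v(3)]] by simp
    also have "\<dots> = Pop (insert c J) (ext c \<phi> v)" using ext_on[OF v(2,3) cS] v by simp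
    finally show ?thesis .
  qed
  show ?thesis unfolding is_hom_def using M A Q P by blast
qed



lemma in_M_mono: "in_M J v \<Longrightarrow> J \<subseteq> K \<Longrightarrow> in_M K v" by (auto simp: in_M_def)

lemma lamLo:
  assumes fJ: "finite J" and cJ: "c \<notin> J" and f: "in_M J f" and n: "n < 4"
  shows "lam_act (insert c J) n f = vadd (lam_act J n f) (ins c (if n = 0 then {} else lam_act J (n - 1) f))"
proof -
  have "n = 0 \<or> n = 1 \<or> n = 2 \<or> n = 3" using n by auto
  moreover have "Qop (insert c J) (Pop (insert c J) f) = vadd (Qop J (Pop J f)) (ins c (Pop J f))"
  proof -
    have "Qop (insert c J) (Pop (insert c J) f) = Qop (insert c J) (vadd (Pop J f) (ins c (Qop J f)))"
      using T3[OF fJ cJ f] by simp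
    also have "\<dots> = vadd (Qop J (Pop J f)) (ins c (vadd (Pop J f) (Qop J (Qop J f))))"
      by (rule QM[OF fJ cJ Pop_M[OF f] Qop_M[OF f]])
    finally show ?thesis using QQ0[OF fJ f] by simp
  qed
  ultimately show ?thesis using T1[OF fJ cJ f] T3[OF fJ cJ f] by (auto simp: lam_act_def)
qed

lemma lamHi:
  assumes fJ: "finite J" and cJ: "c \<notin> J" and f: "in_M J f"
  shows "lam_act (insert c J) n (ins c f) = ins c (lam_act J n f)"
  using T2[OF fJ cJ] T4[OF fJ cJ] f Pop_M by (auto simp: lam_act_def)

inductive_set spn :: "vec set \<Rightarrow> vec set" for B where
  spn_zero: "{} \<in> spn B"
| spn_step: "x \<in> B \<Longrightarrow> y \<in> spn B \<Longrightarrow> vadd x y \<in> spn B"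

lemma spn_base: "x \<in> B \<Longrightarrow> x \<in> spn B"
  using spn_step[OF _ spn_zero] by fastforce

lemma spn_add: "x \<in> spn B \<Longrightarrow> y \<in> spn B \<Longrightarrow> vadd x y \<in> spn B"
  by (induction x rule: spn.induct) (auto simp: vadd_assoc intro: spn_step)

lemma spn_sub: assumes "B \<subseteq> spn C" shows "x \<in> spn B \<Longrightarrow> x \<in> spn C"
  by (induction x rule: spn.induct) (use assms in \<open>auto intro: spn_add spn_zero\<close>)

lemma spn_M: assumes "B \<subseteq> Collect (in_M J)" shows "x \<in> spn B \<Longrightarrow> in_M J x"
  by (induction x rule: spn.induct) (use assms in \<open>auto intro: in_M_vadd\<close>)

lemma spn_hom: assumes "is_hom S J \<phi>" "B \<subseteq> Collect (in_M S)" shows "x \<in> spn B \<Longrightarrow> \<phi> x \<in> spn (\<phi> ` B)"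
proof (induction x rule: spn.induct)
  case spn_zero then show ?case using hom_zero[OF assms(1)] spn.spn_zero by metis
next
  case (spn_step x y)
  have "in_M S y" using spn_M[OF assms(2)] spn_step by blast
  then have "\<phi> (vadd x y) = vadd (\<phi> x) (\<phi> y)" using spn_step hom_add[OF assms(1)] assms(2) by blast
  then show ?case using spn_step by (auto intro: spn.spn_step)
qed

lemma spn_ins: assumes "c \<notin> J" "B \<subseteq> Collect (in_M J)" shows "x \<in> spn B \<Longrightarrow> ins c x \<in> spn (ins c ` B)"
proof (induction x rule: spn.induct)
  case spn_zero then show ?case by (simp add: spn.spn_zero)
next
  case (spn_step x y)
  have "in_M J y" using spn_M[OF assms(2)] spn_step by blast
  then have "ins c (vadd x y) = vadd (ins c x) (ins c y)"
    using spn_step assms by (intro ins_add) (auto intro: cfree_M)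
  then show ?case using spn_step by (auto intro: spn.spn_step)
qed

lemma spn_all:
  assumes "finite J" "\<And>I. I \<subseteq> J \<Longrightarrow> {I} \<in> spn B" "in_M J v"
  shows "v \<in> spn B"
proof -
  have "finite v" using in_M_finite assms by blast
  then show ?thesis using assms(3)
  proof (induction v rule: finite_induct)
    case empty then show ?case by (simp add: spn_zero)
  next
    case (insert I v)
    have "insert I v = vadd {I} v" using insert by (auto simp: vadd_def)
    moreover have "{I} \<in> spn B" using assms(2) insert by (auto simp: in_M_def)
    moreover have "v \<in> spn B" using insert by (auto simp: in_M_def)
    ultimately show ?case by (simp add: spn_add)
  qed
qed

lemma spn_vsumf: "x \<in> spn (b ` S) \<Longrightarrow> \<exists>T\<subseteq>S. finite T \<and> vsumf b T = x"
proof (induction x rule: spn.induct)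
  case spn_zero then show ?case by (intro exI[of _ "{}"]) auto
next
  case (spn_step x y)
  then obtain i where i: "i \<in> S" "x = b i" by auto
  obtain T where T: "T \<subseteq> S" "finite T" "vsumf b T = y" using spn_step by blast
  have "vsumf b (sd {i} T) = vadd x y" using vsumf_vadd_idx[of "{i}" T b] T i by simp
  moreover have "sd {i} T \<subseteq> S" "finite (sd {i} T)" using T i by (auto simp: sd_def)
  ultimately show ?case by blast
qed

definition gens :: "nat set \<Rightarrow> nat set \<Rightarrow> vec list \<Rightarrow> (vec \<Rightarrow> vec) list \<Rightarrow> vec set" where
  "gens J S fs ps = {lam_act J n f | f n. f \<in> set fs \<and> n < 4} \<union> {\<phi> {I} | \<phi> I. \<phi> \<in> set ps \<and> I \<subseteq> S}"

definition decomp :: "nat set \<Rightarrow> nat set \<Rightarrow> vec list \<Rightarrow> (vec \<Rightarrow> vec) list \<Rightarrow> bool" where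
  "decomp J S fs ps \<longleftrightarrow> finite J \<and> finite S \<and> (\<forall>f\<in>set fs. in_M J f) \<and> (\<forall>\<phi>\<in>set ps. is_hom S J \<phi>)
     \<and> (\<forall>I\<subseteq>J. {I} \<in> spn (gens J S fs ps))"

lemma gens_M: "decomp J S fs ps \<Longrightarrow> gens J S fs ps \<subseteq> Collect (in_M J)"
  unfolding decomp_def gens_def using lam_act_M hom_M by (fastforce simp: in_M_def)

definition stepfs :: "nat \<Rightarrow> vec list \<Rightarrow> (vec \<Rightarrow> vec) list \<Rightarrow> vec list \<Rightarrow> vec list" where
  "stepfs c fs ps fs0 = fs @ map (ins c) fs @ concat (map (\<lambda>\<phi>. map (ext c \<phi>) fs0) ps)"
definition stepps :: "nat \<Rightarrow> (vec \<Rightarrow> vec) list \<Rightarrow> (vec \<Rightarrow> vec) list \<Rightarrow> (vec \<Rightarrow> vec) list" where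
  "stepps c ps ps0 = concat (map (\<lambda>\<phi>. map (\<lambda>\<rho>. ext c \<phi> \<circ> \<rho>) ps0) ps)"

lemma step:
  assumes d: "decomp J S fs ps" and d0: "decomp (insert c S) S' fs0 ps0"
    and cJ: "c \<notin> J" and cS: "c \<notin> S"
  shows "decomp (insert c J) S' (stepfs c fs ps fs0) (stepps c ps ps0)"
proof -
  have fJ: "finite J" and fS: "finite S" and fS': "finite S'"
    and fM: "\<forall>f\<in>set fs. in_M J f" and ph: "\<forall>\<phi>\<in>set ps. is_hom S J \<phi>"
    and sp: "\<forall>I\<subseteq>J. {I} \<in> spn (gens J S fs ps)"
    using d d0 by (auto simp: decomp_def)
  have f0M: "\<forall>f\<in>set fs0. in_M (insert c S) f" and rh: "\<forall>\<rho>\<in>set ps0. is_hom S' (insert c S) \<rho>"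
    and sp0: "\<forall>I\<subseteq>insert c S. {I} \<in> spn (gens (insert c S) S' fs0 ps0)"
    using d0 by (auto simp: decomp_def)
  have eh: "is_hom (insert c S) (insert c J) (ext c \<phi>)" if "\<phi> \<in> set ps" for \<phi>
    using is_hom_ext[OF fS fJ cS cJ] ph that by blast
  define G' where "G' = gens (insert c J) S' (stepfs c fs ps fs0) (stepps c ps ps0)"
  have M': "\<forall>f\<in>set (stepfs c fs ps fs0). in_M (insert c J) f"
  proof
    fix f assume "f \<in> set (stepfs c fs ps fs0)"
    then have "f \<in> set fs \<or> f \<in> ins c ` set fs \<or> (\<exists>\<phi>\<in>set ps. \<exists>f0\<in>set fs0. f = ext c \<phi> f0)"
      by (auto simp: stepfs_def)
    then show "in_M (insert c J) f"
    proof (elim disjE)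
      assume "f \<in> set fs" then show ?thesis using fM in_M_mono[OF _ subset_insertI] by blast
    next
      assume "f \<in> ins c ` set fs" then show ?thesis using fM ins_M by blast
    next
      assume "\<exists>\<phi>\<in>set ps. \<exists>f0\<in>set fs0. f = ext c \<phi> f0"
      then obtain \<phi> f0 where "\<phi> \<in> set ps" "f0 \<in> set fs0" "f = ext c \<phi> f0" by blast
      then show ?thesis using hom_M[OF eh] f0M by blast
    qed
  qed
  have H': "\<forall>\<chi>\<in>set (stepps c ps ps0). is_hom S' (insert c J) \<chi>"
  proof
    fix \<chi> assume "\<chi> \<in> set (stepps c ps ps0)"
    then obtain \<phi> \<rho> where "\<phi> \<in> set ps" "\<rho> \<in> set ps0" "\<chi> = ext c \<phi> \<circ> \<rho>"
      by (auto simp: stepps_def)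
    then show "is_hom S' (insert c J) \<chi>" using hom_comp rh eh by blast
  qed
  have free1: "lam_act (insert c J) n f \<in> spn G'" if "f \<in> set fs" "n < 4" for f n
    unfolding G'_def gens_def stepfs_def using that by (intro spn_base) auto
  have free2: "lam_act (insert c J) n (ins c f) \<in> spn G'" if "f \<in> set fs" "n < 4" for f n
    unfolding G'_def gens_def stepfs_def using that by (intro spn_base) auto
  have extK: "ext c \<phi> {K} \<in> spn G'" if ph1: "\<phi> \<in> set ps" and K: "K \<subseteq> insert c S" for \<phi> K
  proof -
    have G0M: "gens (insert c S) S' fs0 ps0 \<subseteq> Collect (in_M (insert c S))" using gens_M[OF d0] .
    have "ext c \<phi> {K} \<in> spn (ext c \<phi> ` gens (insert c S) S' fs0 ps0)"
      using spn_hom[OF eh[OF ph1] G0M] sp0 K by blast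
    moreover have "ext c \<phi> ` gens (insert c S) S' fs0 ps0 \<subseteq> spn G'"
    proof
      fix y assume "y \<in> ext c \<phi> ` gens (insert c S) S' fs0 ps0"
      then obtain x where x: "x \<in> gens (insert c S) S' fs0 ps0" "y = ext c \<phi> x" by blast
      show "y \<in> spn G'"
      proof (cases "\<exists>f n. f \<in> set fs0 \<and> n < 4 \<and> x = lam_act (insert c S) n f")
        case True
        then obtain f n where fn: "f \<in> set fs0" "n < 4" "x = lam_act (insert c S) n f" by blast
        then have "y = lam_act (insert c J) n (ext c \<phi> f)"
          using x hom_lam[OF eh[OF ph1]] f0M by auto
        moreover have "ext c \<phi> f \<in> set (stepfs c fs ps fs0)" using fn ph1 by (auto simp: stepfs_def)
        ultimately show ?thesis unfolding G'_def gens_def using fn by (intro spn_base) blast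
      next
        case False
        then obtain \<rho> I where rI: "\<rho> \<in> set ps0" "I \<subseteq> S'" "x = \<rho> {I}" using x(1) by (auto simp: gens_def)
        then have "y = (ext c \<phi> \<circ> \<rho>) {I}" using x by simp
        moreover have "ext c \<phi> \<circ> \<rho> \<in> set (stepps c ps ps0)" using rI ph1 by (auto simp: stepps_def)
        ultimately show ?thesis unfolding G'_def gens_def using rI by (intro spn_base) blast
      qed
    qed
    ultimately show ?thesis using spn_sub by blast
  qed
  have A1: "x \<in> spn G' \<and> ins c x \<in> spn G'" if x: "x \<in> gens J S fs ps" for x
  proof (cases "\<exists>f n. f \<in> set fs \<and> n < 4 \<and> x = lam_act J n f")
    case True
    then obtain f n where fn: "f \<in> set fs" "n < 4" "x = lam_act J n f" by blast
    have f: "in_M J f" using fM fn by auto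
    have "ins c x \<in> spn G'" using free2[OF fn(1,2)] lamHi[OF fJ cJ f] fn by simp
    moreover have "ins c (if n = 0 then {} else lam_act J (n - 1) f) \<in> spn G'"
    proof (cases "n = 0")
      case True then show ?thesis by (simp add: spn_zero)
    next
      case False
      then have "ins c (lam_act J (n - 1) f) = lam_act (insert c J) (n - 1) (ins c f)"
        using lamHi[OF fJ cJ f] by simp
      then show ?thesis using False free2[OF fn(1), of "n - 1"] fn by simp
    qed
    moreover have "x = vadd (lam_act (insert c J) n f) (ins c (if n = 0 then {} else lam_act J (n - 1) f))"
      using lamLo[OF fJ cJ f fn(2)] fn by (simp add: vadd_assoc)
    ultimately show ?thesis using spn_add free1[OF fn(1,2)] by metis
  next
    case False
    then obtain \<phi> I where pI: "\<phi> \<in> set ps" "I \<subseteq> S" "x = \<phi> {I}" using x by (auto simp: gens_def)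
    have h: "is_hom S J \<phi>" using ph pI by auto
    have IM: "in_M S {I}" using pI by (auto simp: in_M_def)
    have "ext c \<phi> (vadd {I} (ins c {})) = vadd (\<phi> {I}) (ins c (\<phi> {}))"
      by (rule ext_on[OF IM in_M_empty cS])
    then have e1: "ext c \<phi> {I} = x" using hom_zero[OF h] pI by simp
    have "ext c \<phi> (vadd {} (ins c {I})) = vadd (\<phi> {}) (ins c (\<phi> {I}))"
      by (rule ext_on[OF in_M_empty IM cS])
    then have e2: "ext c \<phi> {insert c I} = ins c x" using hom_zero[OF h] pI by (simp add: ins_def)
    show ?thesis using extK[OF pI(1), of I] extK[OF pI(1), of "insert c I"] e1 e2 pI by auto
  qed
  have GM: "gens J S fs ps \<subseteq> Collect (in_M J)" using gens_M[OF d] .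
  have sp': "{I} \<in> spn G'" if I: "I \<subseteq> insert c J" for I
  proof (cases "c \<in> I")
    case False
    then have "I \<subseteq> J" using I by auto
    then show ?thesis using sp A1 spn_sub[of "gens J S fs ps" G'] by blast
  next
    case True
    have I': "I - {c} \<subseteq> J" using I by auto
    have "ins c {I - {c}} \<in> spn (ins c ` gens J S fs ps)"
      using spn_ins[OF cJ GM] sp I' by blast
    moreover have "ins c ` gens J S fs ps \<subseteq> spn G'" using A1 by blast
    moreover have "ins c {I - {c}} = {I}" using True by (auto simp: ins_def)
    ultimately show ?thesis using spn_sub by metis
  qed
  show ?thesis unfolding decomp_def using fJ fS' M' H' sp' G'_def by auto
qed



definition gr :: "nat set \<Rightarrow> nat set \<Rightarrow> nat \<Rightarrow> (vec \<Rightarrow> vec) \<Rightarrow> bool" where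
  "gr S J d \<phi> \<longleftrightarrow> (\<forall>I\<subseteq>S. homog J (card (S - I) + d) (\<phi> {I}))"

lemma homog_vsumf: "(\<And>i. i \<in> T \<Longrightarrow> homog J l (b i)) \<Longrightarrow> homog J l (vsumf b T)"
  unfolding homog_def using in_M_vsumf vsumf_sub by (metis (no_types, lifting) UN_E subsetD)

lemma homog_lift:
  assumes "finite J" "c \<notin> J" "homog J m x" shows "homog (insert c J) (Suc m) x"
  unfolding homog_def
proof (intro conjI ballI)
  show "in_M (insert c J) x" using assms by (auto simp: homog_def in_M_def)
  fix I assume I: "I \<in> x"
  then have "I \<subseteq> J" "card (J - I) = m" using assms by (auto simp: homog_def in_M_def)
  moreover have "insert c J - I = insert c (J - I)" using assms calculation by auto
  ultimately show "card (insert c J - I) = Suc m" using assms by simp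
qed

lemma homog_ins:
  assumes "c \<notin> J" "homog J m x" shows "homog (insert c J) m (ins c x)"
  unfolding homog_def
proof (intro conjI ballI)
  show "in_M (insert c J) (ins c x)" using assms ins_M by (auto simp: homog_def)
  fix K assume "K \<in> ins c x"
  then obtain I where I: "I \<in> x" "K = insert c I" by (auto simp: ins_def)
  then have "I \<subseteq> J" "card (J - I) = m" using assms by (auto simp: homog_def in_M_def)
  moreover have "insert c J - K = J - I" using I assms calculation by auto
  ultimately show "card (insert c J - K) = m" by simp
qed

lemma gr_step:
  assumes fS: "finite S" and fJ: "finite J" and cS: "c \<notin> S" and cJ: "c \<notin> J"
    and h: "is_hom S J \<phi>" and g: "gr S J d \<phi>"
    and hr: "is_hom S' (insert c S) \<rho>" and gg: "gr S' (insert c S) d0 \<rho>"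
  shows "gr S' (insert c J) (d0 + d) (ext c \<phi> \<circ> \<rho>)"
  unfolding gr_def
proof (intro allI impI)
  fix I assume I: "I \<subseteq> S'"
  define l where "l = card (S' - I) + d0"
  define v where "v = \<rho> {I}"
  have hv: "homog (insert c S) l v" using gg I by (auto simp: gr_def l_def v_def)
  have fv: "finite v" using hv in_M_finite[of "insert c S" v] fS by (auto simp: homog_def)
  have eh: "is_hom (insert c S) (insert c J) (ext c \<phi>)" by (rule is_hom_ext[OF fS fJ cS cJ h])
  have vv: "v = vsumf (\<lambda>K. {K}) v" using vsumf_id[OF fv] by simp
  have "ext c \<phi> v = vsumf (\<lambda>K. ext c \<phi> {K}) v"
    using hom_vsumf[OF eh fv, of "\<lambda>K. {K}"] vv hv by (auto simp: homog_def in_M_def)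
  moreover have "homog (insert c J) (l + d) (ext c \<phi> {K})" if K: "K \<in> v" for K
  proof -
    have Ks: "K \<subseteq> insert c S" and Kc: "card (insert c S - K) = l"
      using hv K by (auto simp: homog_def in_M_def)
    show ?thesis
    proof (cases "c \<in> K")
      case False
      then have KS: "K \<subseteq> S" using Ks by auto
      have IM: "in_M S {K}" using KS by (simp add: in_M_def)
      have "ext c \<phi> (vadd {K} (ins c {})) = vadd (\<phi> {K}) (ins c (\<phi> {}))"
        by (rule ext_on[OF IM in_M_empty cS])
      then have e: "ext c \<phi> {K} = \<phi> {K}" using hom_zero[OF h] by simp
      have "homog J (card (S - K) + d) (\<phi> {K})" using g KS by (auto simp: gr_def)
      then have "homog (insert c J) (Suc (card (S - K) + d)) (\<phi> {K})" by (rule homog_lift[OF fJ cJ])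
      moreover have "insert c S - K = insert c (S - K)" using False by auto
      then have "l = Suc (card (S - K))" using Kc fS cS by simp
      ultimately show ?thesis using e by simp
    next
      case True
      define K' where "K' = K - {c}"
      have KS: "K' \<subseteq> S" using Ks by (auto simp: K'_def)
      have IM: "in_M S {K'}" using KS by (simp add: in_M_def)
      have "ext c \<phi> (vadd {} (ins c {K'})) = vadd (\<phi> {}) (ins c (\<phi> {K'}))"
        by (rule ext_on[OF in_M_empty IM cS])
      moreover have "ins c {K'} = {K}" using True by (auto simp: ins_def K'_def)
      ultimately have e: "ext c \<phi> {K} = ins c (\<phi> {K'})" using hom_zero[OF h] by simp
      have "homog J (card (S - K') + d) (\<phi> {K'})" using g KS by (auto simp: gr_def)
      then have "homog (insert c J) (card (S - K') + d) (ins c (\<phi> {K'}))" by (rule homog_ins[OF cJ])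
      moreover have "insert c S - K = S - K'" using True cS by (auto simp: K'_def)
      then have "l = card (S - K')" using Kc by simp
      ultimately show ?thesis using e by simp
    qed
  qed
  ultimately have "homog (insert c J) (l + d) (ext c \<phi> v)" by (simp add: homog_vsumf)
  then show "homog (insert c J) (card (S' - I) + (d0 + d)) ((ext c \<phi> \<circ> \<rho>) {I})"
    by (simp add: l_def v_def add.assoc)
qed

lemma len_stepfs: "length (stepfs c fs ps fs0) = 2 * length fs + length ps * length fs0"
  by (simp add: stepfs_def length_concat comp_def sum_list_triv)
lemma len_stepps: "length (stepps c ps ps0) = length ps * length ps0"
  by (simp add: stepps_def length_concat comp_def sum_list_triv)

lemma hom_lext:
  assumes fS: "finite S" and fK: "finite K"
    and M: "\<And>I. I \<subseteq> S \<Longrightarrow> in_M K (f I)"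
    and Q: "\<And>I. I \<subseteq> S \<Longrightarrow> vsumf f (Qb S I) = Qop K (f I)"
    and P: "\<And>I. I \<subseteq> S \<Longrightarrow> vsumf f (Pb S I) = Pop K (f I)"
  shows "is_hom S K (vsumf f)"
proof -
  have fin: "finite v" if "in_M S v" for v using in_M_finite[OF fS that] .
  have el: "I \<subseteq> S" if "in_M S v" "I \<in> v" for v I using that by (auto simp: in_M_def)
  have ff: "finite (f I)" if "I \<subseteq> S" for I using in_M_finite[OF fK M[OF that]] .
  show ?thesis unfolding is_hom_def
  proof (intro conjI allI impI)
    fix v assume v: "in_M S v"
    show "in_M K (vsumf f v)" using M el[OF v] by (intro in_M_vsumf) blast
    have "vsumf f (Qop S v) = vsumf (\<lambda>I. vsumf f (Qb S I)) v"
      unfolding Qop_def using fin[OF v] fS by (intro vsumf_comp) auto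
    also have "\<dots> = vsumf (\<lambda>I. vsumf (Qb K) (f I)) v"
      using Q el[OF v] by (intro vsumf_cong) (simp add: Qop_def)
    also have "\<dots> = Qop K (vsumf f v)"
      unfolding Qop_def using fin[OF v] ff el[OF v] by (intro vsumf_comp[symmetric]) auto
    finally show "vsumf f (Qop S v) = Qop K (vsumf f v)" .
    have "vsumf f (Pop S v) = vsumf (\<lambda>I. vsumf f (Pb S I)) v"
      unfolding Pop_def using fin[OF v] fS by (intro vsumf_comp) auto
    also have "\<dots> = vsumf (\<lambda>I. vsumf (Pb K) (f I)) v"
      using P el[OF v] by (intro vsumf_cong) (simp add: Pop_def)
    also have "\<dots> = Pop K (vsumf f v)"
      unfolding Pop_def using fin[OF v] ff el[OF v] by (intro vsumf_comp[symmetric]) auto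
    finally show "vsumf f (Pop S v) = Pop K (vsumf f v)" .
  next
    fix v w assume v: "in_M S v" and w: "in_M S w"
    show "vsumf f (vadd v w) = vadd (vsumf f v) (vsumf f w)"
      using vsumf_vadd_idx[OF fin[OF v] fin[OF w]] by (simp add: vadd_sd)
  qed
qed

lemma Pb_small: "card (J - I) \<le> 1 \<Longrightarrow> finite J \<Longrightarrow> Pb J I = {}"
proof -
  assume a: "card (J - I) \<le> 1" "finite J"
  { fix j j' assume "j \<in> J - I" "j' \<in> J - I" "j \<noteq> j'"
    then have "{j, j'} \<subseteq> J - I" by auto
    then have "card {j, j'} \<le> card (J - I)" using a by (intro card_mono) auto
    then have False using \<open>j \<noteq> j'\<close> a by simp }
  then show ?thesis by (auto simp: Pb_def)
qed

lemma Pb_two: "J - I = {a, b} \<Longrightarrow> a \<noteq> b \<Longrightarrow> I \<subseteq> J \<Longrightarrow> Pb J I = {J}"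
  unfolding Pb_def by (auto simp: insert_commute)

lemma Pb_three: "J - I = {a, b, d} \<Longrightarrow> a \<noteq> b \<Longrightarrow> a \<noteq> d \<Longrightarrow> b \<noteq> d \<Longrightarrow>
   Pb J I = {I \<union> {a, b}, I \<union> {a, d}, I \<union> {b, d}}"
  unfolding Pb_def by (auto simp: insert_commute)

lemma Pow3: "I \<subseteq> {a, b, d} \<Longrightarrow> I = {} \<or> I = {a} \<or> I = {b} \<or> I = {d} \<or> I = {a, b} \<or> I = {a, d} \<or> I = {b, d} \<or> I = {a, b, d}"
proof -
  assume "I \<subseteq> {a, b, d}"
  then have "I \<in> Pow {a, b, d}" by simp
  then show ?thesis by (simp add: Pow_insert insert_commute)
qed

lemma Pow2: "I \<subseteq> {a, b} \<Longrightarrow> I = {} \<or> I = {a} \<or> I = {b} \<or> I = {a, b}"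
proof -
  assume "I \<subseteq> {a, b}"
  then have "I \<in> Pow {a, b}" by simp
  then show ?thesis by (simp add: Pow_insert insert_commute)
qed

lemma Pow1: "I \<subseteq> {a} \<Longrightarrow> I = {} \<or> I = {a}" by auto



lemma vsumf_two: "x \<noteq> y \<Longrightarrow> vsumf b {x, y} = vadd (b x) (b y)"
  by (simp add: vsumf_insert)

definition rl :: "nat \<Rightarrow> nat set \<Rightarrow> nat set" where
  "rl c I = (if 2 \<in> I then insert c (I - {2}) else I)"
definition rhoA :: "nat \<Rightarrow> vec \<Rightarrow> vec" where "rhoA c = vsumf (\<lambda>I. {rl c I})"

lemma localA:
  assumes c1: "c \<noteq> 1"
  shows "decomp (insert c {1}) {1,2} [] [rhoA c]" "gr {1,2} (insert c {1}) 0 (rhoA c)"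
proof -
  have c1': "1 \<noteq> c" "Suc 0 \<noteq> c" "c \<noteq> Suc 0" using c1 by auto
  have rl: "rl c {} = {}" "rl c {1} = {1}" "rl c {2} = {c}" "rl c {1,2} = {1,c}"
    unfolding rl_def by (auto simp: insert_commute)
  have h: "is_hom {1,2} (insert c {1}) (rhoA c)"
    unfolding rhoA_def
  proof (rule hom_lext)
    fix I :: "nat set" assume "I \<subseteq> {1,2}"
    then have I: "I = {} \<or> I = {1} \<or> I = {2} \<or> I = {1,2}" by (rule Pow2)
    show "in_M (insert c {1}) {rl c I}" using I rl by (auto simp: in_M_def)
    show "vsumf (\<lambda>I. {rl c I}) (Qb {1, 2} I) = Qop (insert c {1}) {rl c I}"
      using I by (elim disjE) (use rl c1 c1' in \<open>simp_all add: Qb_img vsumf_two insert_commute vadd_def insert_Diff_if\<close>)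
    show "vsumf (\<lambda>I. {rl c I}) (Pb {1, 2} I) = Pop (insert c {1}) {rl c I}"
      using I
    proof (elim disjE)
      assume "I = {}"
      moreover have "Pb {1,2} {} = {{1,2}}" by (rule Pb_two[of _ _ 1 2]) auto
      moreover have "Pb (insert c {1}) {} = {{c,1}}" by (rule Pb_two[of _ _ 1 c]) (use c1 in auto)
      ultimately show ?thesis using rl by (simp add: insert_commute)
    next
      assume "I = {1}"
      moreover have "Pb {1,2} {1} = {}" by (rule Pb_small) (use c1' in \<open>auto simp: card_insert_if\<close>)
      moreover have "Pb (insert c {1}) {1} = {}" by (rule Pb_small) (use c1' in \<open>auto simp: card_insert_if\<close>)
      ultimately show ?thesis using rl by simp
    next
      assume "I = {2}"
      moreover have "Pb {1,2} {2} = {}" by (rule Pb_small) (use c1' in \<open>auto simp: card_insert_if\<close>)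
      moreover have "Pb (insert c {1}) {c} = {}" by (rule Pb_small) (use c1' in \<open>auto simp: card_insert_if\<close>)
      ultimately show ?thesis using rl by simp
    next
      assume "I = {1,2}"
      moreover have "Pb {1,2} {1,2} = {}" by (rule Pb_small) (use c1' in \<open>auto simp: card_insert_if\<close>)
      moreover have "Pb (insert c {1}) {1,c} = {}" by (rule Pb_small) (use c1' in \<open>auto simp: card_insert_if\<close>)
      ultimately show ?thesis using rl by simp
    qed
  qed auto
  have img: "rhoA c {I} = {rl c I}" for I by (simp add: rhoA_def)
  have sp: "{K} \<in> spn (gens (insert c {1}) {1,2} [] [rhoA c])" if K: "K \<subseteq> insert c {1}" for K
  proof -
    define I where "I = (if c \<in> K then insert 2 (K - {c}) else K)"
    have "I \<subseteq> {1,2}" "rl c I = K" using K c1 by (auto simp: I_def rl_def)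
    then show ?thesis unfolding gens_def by (intro spn_base) (auto simp: img)
  qed
  show "decomp (insert c {1}) {1,2} [] [rhoA c]" unfolding decomp_def using h sp by auto
  show "gr {1,2} (insert c {1}) 0 (rhoA c)" unfolding gr_def
  proof (intro allI impI)
    fix I :: "nat set" assume "I \<subseteq> {1,2}"
    then have I: "I = {} \<or> I = {1} \<or> I = {2} \<or> I = {1,2}" by (rule Pow2)
    then show "homog (insert c {1}) (card ({1, 2} - I) + 0) (rhoA c {I})"
      using rl c1 c1' by (auto simp: img homog_def in_M_def insert_commute)
  qed
qed

lemma genmem1: "f \<in> set fs \<Longrightarrow> n < 4 \<Longrightarrow> lam_act J n f \<in> gens J S fs ps"
  unfolding gens_def by blast
lemma genmem2: "\<phi> \<in> set ps \<Longrightarrow> I \<subseteq> S \<Longrightarrow> \<phi> {I} \<in> gens J S fs ps"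
  unfolding gens_def by blast

definition rho0 :: "nat \<Rightarrow> vec \<Rightarrow> vec" where
  "rho0 c = vsumf (\<lambda>I. if I = {} then {{1},{2}} else {{1,c},{2,c}})"
definition rho1 :: "nat \<Rightarrow> vec \<Rightarrow> vec" where
  "rho1 c = vsumf (\<lambda>I. if I = {} then {{2},{c}} else {{1,2},{1,c}})"

lemma vsumf_three: "x \<noteq> y \<Longrightarrow> x \<noteq> z \<Longrightarrow> y \<noteq> z \<Longrightarrow> vsumf b {x, y, z} = vadd (b x) (vadd (b y) (b z))"
  by (simp add: vsumf_insert)

lemma localB:
  assumes c1: "c \<noteq> 1" and c2: "c \<noteq> 2"
  shows "decomp (insert c {1,2}) {1} [{{}}] [rho0 c, rho1 c]"
    "gr {1} (insert c {1,2}) 1 (rho0 c)" "gr {1} (insert c {1,2}) 1 (rho1 c)"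
proof -
  have cc: "1 \<noteq> c" "Suc 0 \<noteq> c" "c \<noteq> Suc 0" "2 \<noteq> c" using c1 c2 by auto
  define J where "J = insert c {1,2::nat}"
  note simps = Qb_img vsumf_two vsumf_three insert_commute vadd_def insert_Diff_if doubleton_eq_iff J_def
  have PJ1: "Pb J {1} = {J}" by (rule Pb_two[of _ _ 2 c]) (use c1 c2 cc in \<open>auto simp: J_def\<close>)
  have PJ2: "Pb J {2} = {J}" by (rule Pb_two[of _ _ 1 c]) (use c1 c2 cc in \<open>auto simp: J_def\<close>)
  have PJc: "Pb J {c} = {J}" by (rule Pb_two[of _ _ 1 2]) (use c1 c2 cc in \<open>auto simp: J_def\<close>)
  have PJs: "Pb J I = {}" if "I = {1,c} \<or> I = {2,c} \<or> I = {1,2}" for I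
    by (rule Pb_small) (use that c1 c2 cc in \<open>auto simp: J_def card_insert_if insert_Diff_if\<close>)
  have P1a: "Pb {1} I = {}" for I by (rule Pb_small) (auto simp: card_insert_if insert_Diff_if)
  have P1b: "Pb {Suc 0} I = {}" for I using P1a[of I] by simp
  note P1 = P1a P1b
  have PJ': "Pb J {Suc 0} = {J}" "Pb J {Suc 0, c} = {}" "Pb J {2, c} = {}" "Pb J {Suc 0, 2} = {}"
    using PJ1 PJs by auto
  have finJ: "finite J" by (simp add: J_def)
  have Q1: "Qb {1} {} = {{1}}" "Qb {1} {1} = {}" by (auto simp: Qb_def)
  have h0: "is_hom {1} J (rho0 c)"
    unfolding rho0_def
  proof (rule hom_lext)
    fix I :: "nat set" assume "I \<subseteq> {1}"
    then have I: "I = {} \<or> I = {1}" by (rule Pow1)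
    show "in_M J (if I = {} then {{1},{2}} else {{1,c},{2,c}})" by (auto simp: in_M_def J_def)
    show "vsumf (\<lambda>I. if I = {} then {{1},{2}} else {{1,c},{2,c}}) (Qb {1} I) =
        Qop J (if I = {} then {{1},{2}} else {{1,c},{2,c}})"
      using I by (elim disjE) (use cc in \<open>simp_all add: Q1 simps Qop_def\<close>)
    show "vsumf (\<lambda>I. if I = {} then {{1},{2}} else {{1,c},{2,c}}) (Pb {1} I) =
        Pop J (if I = {} then {{1},{2}} else {{1,c},{2,c}})"
      using I by (elim disjE) (use cc in \<open>simp_all add: P1 PJ1 PJ2 PJs PJ' doubleton_eq_iff vsumf_two Pop_def\<close>)
  qed (auto simp: finJ)
  have h1: "is_hom {1} J (rho1 c)"
    unfolding rho1_def
  proof (rule hom_lext)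
    fix I :: "nat set" assume "I \<subseteq> {1}"
    then have I: "I = {} \<or> I = {1}" by (rule Pow1)
    show "in_M J (if I = {} then {{2},{c}} else {{1,2},{1,c}})" by (auto simp: in_M_def J_def)
    show "vsumf (\<lambda>I. if I = {} then {{2},{c}} else {{1,2},{1,c}}) (Qb {1} I) =
        Qop J (if I = {} then {{2},{c}} else {{1,2},{1,c}})"
      using I by (elim disjE) (use cc in \<open>simp_all add: Q1 simps Qop_def\<close>)
    show "vsumf (\<lambda>I. if I = {} then {{2},{c}} else {{1,2},{1,c}}) (Pb {1} I) =
        Pop J (if I = {} then {{2},{c}} else {{1,2},{1,c}})"
      using I by (elim disjE) (use cc in \<open>simp_all add: P1 PJ2 PJc PJs PJ' doubleton_eq_iff vsumf_two Pop_def\<close>)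
  qed (auto simp: finJ)
  define G where "G = gens J {1} [{{}}] [rho0 c, rho1 c]"
  have r0: "rho0 c {{}} = {{1},{2}}" "rho0 c {{1}} = {{1,c},{2,c}}" by (simp_all add: rho0_def)
  have r1: "rho1 c {{}} = {{2},{c}}" "rho1 c {{1}} = {{1,2},{1,c}}" by (simp_all add: rho1_def)
  have g: "{{}} \<in> G" "Qop J {{}} \<in> G" "Pop J {{}} \<in> G" "Qop J (Pop J {{}}) \<in> G"
    "{{1},{2}} \<in> G" "{{1,c},{2,c}} \<in> G" "{{2},{c}} \<in> G" "{{1,2},{1,c}} \<in> G"
  proof -
    have m1: "lam_act J n {{}} \<in> G" if "n < 4" for n
      unfolding G_def by (rule genmem1) (use that in auto)
    have m2: "\<phi> {I} \<in> G" if "\<phi> \<in> set [rho0 c, rho1 c]" "I \<subseteq> {1}" for \<phi> I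
      unfolding G_def by (rule genmem2) (use that in auto)
    show "{{}} \<in> G" using m1[of 0] by (simp add: lam_act_def)
    show "Qop J {{}} \<in> G" using m1[of 1] by (simp add: lam_act_def)
    show "Pop J {{}} \<in> G" using m1[of 2] by (simp add: lam_act_def)
    show "Qop J (Pop J {{}}) \<in> G" using m1[of 3] by (simp add: lam_act_def)
    show "{{1},{2}} \<in> G" using m2[of "rho0 c" "{}"] r0 by simp
    show "{{1,c},{2,c}} \<in> G" using m2[of "rho0 c" "{1}"] r0 by simp
    show "{{2},{c}} \<in> G" using m2[of "rho1 c" "{}"] r1 by simp
    show "{{1,2},{1,c}} \<in> G" using m2[of "rho1 c" "{1}"] r1 by simp
  qed
  have q0: "Qop J {{}} = {{1},{2},{c}}" using cc by (simp add: simps)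
  have p0: "Pop J {{}} = {{1,2},{1,c},{2,c}}"
  proof -
    have "Pb J {} = {{} \<union> {c,1}, {} \<union> {c,2}, {} \<union> {1,2}}"
      by (rule Pb_three) (use cc in \<open>auto simp: J_def\<close>)
    then show ?thesis by (simp add: insert_commute)
  qed
  have qp0: "Qop J (Pop J {{}}) = {J}"
    unfolding p0 using cc by (simp add: simps Qop_def)
  have ad: "vadd x y \<in> spn G" if "x \<in> spn G" "y \<in> spn G" for x y using spn_add that .
  have b: "x \<in> G \<Longrightarrow> x \<in> spn G" for x by (rule spn_base)
  have sp: "{I} \<in> spn G" if I: "I \<subseteq> J" for I
  proof -
    have "I \<subseteq> {c,1,2}" using I by (simp add: J_def)
    then have "I = {} \<or> I = {c} \<or> I = {1} \<or> I = {2} \<or> I = {c,1} \<or> I = {c,2} \<or> I = {1,2} \<or> I = {c,1,2}"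
      by (rule Pow3)
    then show ?thesis
    proof (elim disjE)
      assume "I = {}" then show ?thesis using b g by simp
    next
      assume "I = {c}"
      have "{I} = vadd (Qop J {{}}) {{1},{2}}" using cc \<open>I = {c}\<close> q0 by (simp add: simps)
      then show ?thesis using ad b g by metis
    next
      assume "I = {1}"
      have "{I} = vadd (Qop J {{}}) {{2},{c}}" using cc \<open>I = {1}\<close> q0 by (simp add: simps)
      then show ?thesis using ad b g by metis
    next
      assume "I = {2}"
      have "{I} = vadd (Qop J {{}}) (vadd {{2},{c}} {{1},{2}})" using cc \<open>I = {2}\<close> q0 by (simp add: simps)
      then show ?thesis using ad b g by metis
    next
      assume "I = {c,1}"
      have "{I} = vadd (Pop J {{}}) (vadd {{1,c},{2,c}} {{1,2},{1,c}})" using cc \<open>I = {c,1}\<close> p0 by (simp add: simps)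
      then show ?thesis using ad b g by metis
    next
      assume "I = {c,2}"
      have "{I} = vadd (Pop J {{}}) {{1,2},{1,c}}" using cc \<open>I = {c,2}\<close> p0 by (simp add: simps)
      then show ?thesis using ad b g by metis
    next
      assume "I = {1,2}"
      have "{I} = vadd (Pop J {{}}) {{1,c},{2,c}}" using cc \<open>I = {1,2}\<close> p0 by (simp add: simps)
      then show ?thesis using ad b g by metis
    next
      assume "I = {c,1,2}"
      have "{I} = Qop J (Pop J {{}})" using qp0 \<open>I = {c,1,2}\<close> by (simp add: J_def)
      then show ?thesis using b g by metis
    qed
  qed
  show "decomp (insert c {1,2}) {1} [{{}}] [rho0 c, rho1 c]"
    unfolding decomp_def using h0 h1 sp finJ by (auto simp: G_def J_def in_M_def)
  show "gr {1} (insert c {1,2}) 1 (rho0 c)" unfolding gr_def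
  proof (intro allI impI)
    fix I :: "nat set" assume "I \<subseteq> {1}"
    then have "I = {} \<or> I = {1}" by (rule Pow1)
    then show "homog (insert c {1,2}) (card ({1} - I) + 1) (rho0 c {I})"
      using cc r0 by (auto simp: homog_def in_M_def card_insert_if insert_Diff_if)
  qed
  show "gr {1} (insert c {1,2}) 1 (rho1 c)" unfolding gr_def
  proof (intro allI impI)
    fix I :: "nat set" assume "I \<subseteq> {1}"
    then have "I = {} \<or> I = {1}" by (rule Pow1)
    then show "homog (insert c {1,2}) (card ({1} - I) + 1) (rho1 c {I})"
      using cc r1 by (auto simp: homog_def in_M_def card_insert_if insert_Diff_if)
  qed
qed



fun dat :: "nat \<Rightarrow> vec list \<times> (vec \<Rightarrow> vec) list" where
  "dat 0 = ([], [id])"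
| "dat (Suc n) = (if even n
     then (stepfs (n+2) (fst (dat n)) (snd (dat n)) [], stepps (n+2) (snd (dat n)) [rhoA (n+2)])
     else (stepfs (n+2) (fst (dat n)) (snd (dat n)) [{{}}], stepps (n+2) (snd (dat n)) [rho0 (n+2), rho1 (n+2)]))"

definition Sn :: "nat \<Rightarrow> nat set" where "Sn n = (if even n then {1} else {1,2})"

definition dinv :: "nat \<Rightarrow> bool" where
  "dinv n \<longleftrightarrow> decomp {1..n+1} (Sn n) (fst (dat n)) (snd (dat n))
     \<and> (\<forall>\<phi>\<in>set (snd (dat n)). gr (Sn n) {1..n+1} (n div 2) \<phi>)
     \<and> length (snd (dat n)) = 2 ^ (n div 2)
     \<and> 4 * length (fst (dat n)) + 2 ^ card (Sn n) * length (snd (dat n)) = 2 ^ (n+1)"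

lemma dinv0: "dinv 0"
proof -
  have h: "is_hom {1} {1} id" by (simp add: is_hom_def)
  have sp: "{I} \<in> spn (gens {1} {1} [] [id])" if "I \<subseteq> {1}" for I
    by (rule spn_base) (use that in \<open>auto simp: gens_def\<close>)
  have g: "gr {1} {1} 0 id" by (auto simp: gr_def homog_def in_M_def)
  show ?thesis unfolding dinv_def Sn_def decomp_def using h sp g by auto
qed

lemma interval_Suc: "{1..Suc n + 1} = insert (n + 2) {1..n+1}" by auto

lemma dinv_step:
  assumes "dinv n" shows "dinv (Suc n)"
proof -
  define fs where "fs = fst (dat n)"
  define ps where "ps = snd (dat n)"
  define c where "c = n + 2"
  define J where "J = {1..n+1}"
  have d: "decomp J (Sn n) fs ps" and gph: "\<forall>\<phi>\<in>set ps. gr (Sn n) J (n div 2) \<phi>"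
    and lp: "length ps = 2 ^ (n div 2)"
    and cnt: "4 * length fs + 2 ^ card (Sn n) * length ps = 2 ^ (n+1)"
    using assms by (auto simp: dinv_def fs_def ps_def J_def)
  have cJ: "c \<notin> J" by (simp add: c_def J_def)
  have fJ: "finite J" by (simp add: J_def)
  have J': "{1..Suc n + 1} = insert c J" by (auto simp: c_def J_def)
  have cardJ: "card J = n + 1" by (simp add: J_def)
  have hom: "\<forall>\<phi>\<in>set ps. is_hom (Sn n) J \<phi>" using d by (simp add: decomp_def)
  show ?thesis
  proof (cases "even n")
    case True
    have S: "Sn n = {1}" "Sn (Suc n) = {1,2}" using True by (auto simp: Sn_def)
    have c1: "c \<noteq> 1" by (simp add: c_def)
    have cS: "c \<notin> Sn n" using S c1 by simp
    have dat: "dat (Suc n) = (stepfs c fs ps [], stepps c ps [rhoA c])"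
      using True by (simp add: fs_def ps_def c_def)
    note lA = localA[OF c1]
    have D: "decomp (insert c J) {1,2} (stepfs c fs ps []) (stepps c ps [rhoA c])"
      using step[OF d _ cJ cS] lA(1) S by simp
    have Gr: "\<forall>\<chi>\<in>set (stepps c ps [rhoA c]). gr {1,2} (insert c J) (Suc n div 2) \<chi>"
    proof
      fix \<chi> assume "\<chi> \<in> set (stepps c ps [rhoA c])"
      then obtain \<phi> where ph: "\<phi> \<in> set ps" "\<chi> = ext c \<phi> \<circ> rhoA c" by (auto simp: stepps_def)
      have hA: "is_hom {1,2} (insert c {1}) (rhoA c)" using lA(1) by (simp add: decomp_def)
      have "gr {1,2} (insert c J) (0 + n div 2) (ext c \<phi> \<circ> rhoA c)"
        using gr_step[of "{1}" J c \<phi> "n div 2" "{1,2}" "rhoA c" 0] ph hom gph S fJ cJ c1 hA lA(2) by auto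
      then show "gr {1,2} (insert c J) (Suc n div 2) \<chi>" using True ph by simp
    qed
    show ?thesis unfolding dinv_def dat J' using D Gr S lp cnt True
      by (auto simp: len_stepfs len_stepps cardJ)
  next
    case False
    have S: "Sn n = {1,2}" "Sn (Suc n) = {1}" using False by (auto simp: Sn_def)
    have n0: "0 < n" using False by presburger
    have c1: "c \<noteq> 1" and c2: "c \<noteq> 2" using n0 by (auto simp: c_def)
    have cS: "c \<notin> Sn n" using S c1 c2 by simp
    have dat: "dat (Suc n) = (stepfs c fs ps [{{}}], stepps c ps [rho0 c, rho1 c])"
      using False by (simp add: fs_def ps_def c_def)
    note lB = localB[OF c1 c2]
    have D: "decomp (insert c J) {1} (stepfs c fs ps [{{}}]) (stepps c ps [rho0 c, rho1 c])"
      using step[OF d _ cJ cS] lB(1) S by simp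
    have hB: "is_hom {1} (insert c {1,2}) \<rho>" if "\<rho> \<in> set [rho0 c, rho1 c]" for \<rho>
      using lB(1) that unfolding decomp_def by auto
    have gB: "gr {1} (insert c {1,2}) 1 \<rho>" if "\<rho> \<in> set [rho0 c, rho1 c]" for \<rho>
      using lB(2,3) that by auto
    have Gr: "\<forall>\<chi>\<in>set (stepps c ps [rho0 c, rho1 c]). gr {1} (insert c J) (Suc n div 2) \<chi>"
    proof
      fix \<chi> assume "\<chi> \<in> set (stepps c ps [rho0 c, rho1 c])"
      then obtain \<phi> \<rho> where ph: "\<phi> \<in> set ps" "\<rho> \<in> set [rho0 c, rho1 c]" "\<chi> = ext c \<phi> \<circ> \<rho>"
        by (auto simp: stepps_def)
      have "gr {1} (insert c J) (1 + n div 2) (ext c \<phi> \<circ> \<rho>)"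
        using gr_step[of "{1,2}" J c \<phi> "n div 2" "{1}" \<rho> 1] ph hom gph S fJ cJ c1 c2 hB[OF ph(2)] gB[OF ph(2)] n0
        by auto
      moreover have "1 + n div 2 = Suc n div 2" using False by presburger
      ultimately show "gr {1} (insert c J) (Suc n div 2) \<chi>" using ph by simp
    qed
    have lp': "2 ^ (n div 2) * 2 = (2::nat) ^ (Suc n div 2)"
    proof -
      have "Suc n div 2 = Suc (n div 2)" using False by presburger
      then show ?thesis by simp
    qed
    show ?thesis unfolding dinv_def dat J' using D Gr S lp cnt lp'
      by (auto simp: len_stepfs len_stepps cardJ)
  qed
qed

lemma dinv_all: "dinv n" by (induction n) (auto intro: dinv0 dinv_step)

lemma basis_from_span:
  assumes fI: "finite Idx" and cI: "card Idx = 2 ^ card J" and fJ: "finite J"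
    and M: "\<And>x. x \<in> Idx \<Longrightarrow> in_M J (b x)"
    and sp: "\<And>v. in_M J v \<Longrightarrow> v \<in> spn (b ` Idx)"
  shows "is_basis J b Idx"
proof -
  define F where "F = (\<lambda>T. vsumf b T)"
  have span: "\<exists>T\<subseteq>Idx. vsumf b T = v" if "in_M J v" for v
    using spn_vsumf[OF sp[OF that]] by blast
  have img: "F ` Pow Idx = Pow (Pow J)"
  proof
    show "F ` Pow Idx \<subseteq> Pow (Pow J)"
    proof
      fix v assume "v \<in> F ` Pow Idx"
      then obtain T where "T \<subseteq> Idx" "v = vsumf b T" by (auto simp: F_def)
      then have "in_M J v" using M by (auto intro!: in_M_vsumf)
      then show "v \<in> Pow (Pow J)" by (simp add: in_M_def)
    qed
    show "Pow (Pow J) \<subseteq> F ` Pow Idx"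
    proof
      fix v assume "v \<in> Pow (Pow J)"
      then have "in_M J v" by (simp add: in_M_def)
      then obtain T where "T \<subseteq> Idx" "vsumf b T = v" using span by blast
      then show "v \<in> F ` Pow Idx" unfolding F_def by blast
    qed
  qed
  have "card (F ` Pow Idx) = card (Pow Idx)"
    unfolding img using fI fJ cI by (simp add: card_Pow)
  then have inj: "inj_on F (Pow Idx)" using fI by (simp add: inj_on_iff_eq_card)
  have ind: "vsumf b T \<noteq> vzero" if "T \<subseteq> Idx" "T \<noteq> {}" for T
  proof
    assume "vsumf b T = vzero"
    then have "F T = F {}" by (simp add: F_def vzero_def)
    then have "T = {}" using inj that by (auto dest: inj_onD)
    then show False using that by simp
  qed
  show ?thesis unfolding is_basis_def using fI M ind span by blast
qed



lemma odd_case: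
  fixes k t :: nat
  assumes kt: "k = 2 * t + 1"
  shows "\<exists>(m::nat) (f::nat \<Rightarrow> vec) (g::nat \<Rightarrow> vec).
        (\<forall>i < 2 ^ t. Pop {1..k} (g i) = vzero \<and> homog {1..k} (t + 1) (g i)) \<and>
        is_basis {1..k}
          (\<lambda>x. case x of Inl (a, n) \<Rightarrow> lam_act {1..k} n (f a)
                        | Inr (i, e) \<Rightarrow> (if e = 0 then g i else Qop {1..k} (g i)))
          ({Inl (a, n) | a n. a < m \<and> n < 4} \<union> {Inr (i, e) | i (e::nat). i < 2 ^ t \<and> e < 2})"
proof -
  define n where "n = 2 * t"
  define fs where "fs = fst (dat n)"
  define ps where "ps = snd (dat n)"
  define J where "J = {1..k}"
  have I: "dinv n" by (rule dinv_all)
  have Sn: "Sn n = {1}" by (simp add: Sn_def n_def)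
  have Jn: "{1..n+1} = J" by (simp add: J_def kt n_def)
  have d: "decomp J {1} fs ps" and gph: "\<forall>\<phi>\<in>set ps. gr {1} J t \<phi>"
    and lp: "length ps = 2 ^ t" and cnt: "4 * length fs + 2 * length ps = 2 ^ (n+1)"
    using I Sn Jn by (auto simp: dinv_def fs_def ps_def n_def)
  have fJ: "finite J" by (simp add: J_def)
  have hom: "is_hom {1} J \<phi>" if "\<phi> \<in> set ps" for \<phi> using d that by (simp add: decomp_def)
  have fM: "in_M J f" if "f \<in> set fs" for f using d that by (simp add: decomp_def)
  define m where "m = length fs"
  define f where "f = (\<lambda>a. fs ! a)"
  define g where "g = (\<lambda>i. (ps ! i) {{}})"
  define b where "b = (\<lambda>x::(nat \<times> nat + nat \<times> nat). case x of Inl (a, n) \<Rightarrow> lam_act J n (f a)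
                        | Inr (i, e) \<Rightarrow> (if e = 0 then g i else Qop J (g i)))"
  define Idx :: "(nat \<times> nat + nat \<times> nat) set" where
    "Idx = {Inl (a, n) | a n. a < m \<and> n < 4} \<union> {Inr (i, e) | i (e::nat). i < 2 ^ t \<and> e < 2}"
  have Idx_eq: "Idx = Inl ` ({..<m} \<times> {..<4}) \<union> Inr ` ({..<2^t} \<times> {..<2})"
    unfolding Idx_def by auto
  have psi: "ps ! i \<in> set ps" if "i < 2 ^ t" for i using lp that by simp
  have Q1: "(ps ! i) {{1}} = Qop J (g i)" if "i < 2 ^ t" for i
  proof -
    have e: "in_M {1} {{}}" by (simp add: in_M_def)
    have "(ps ! i) (Qop {1} {{}}) = Qop J ((ps ! i) {{}})"
      by (rule hom_Q[OF hom[OF psi[OF that]] e])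
    moreover have "Qop {1} {{}} = {{1}}" by (auto simp: Qb_def)
    ultimately show ?thesis by (simp add: g_def)
  qed
  have part1: "\<forall>i < 2 ^ t. Pop J (g i) = vzero \<and> homog J (t + 1) (g i)"
  proof (intro allI impI conjI)
    fix i :: nat assume i: "i < 2 ^ t"
    have h: "is_hom {1} J (ps ! i)" using hom psi i by blast
    have e: "in_M {1} {{}}" by (simp add: in_M_def)
    have "(ps ! i) (Pop {1} {{}}) = Pop J ((ps ! i) {{}})"
      by (rule hom_P[OF h e])
    moreover have "Pop {1} {{}} = {}" by (auto simp: Pb_def)
    ultimately show "Pop J (g i) = vzero" using hom_zero[OF h] by (simp add: g_def vzero_def)
    have "gr {1} J t (ps ! i)" using gph psi[OF i] by blast
    then have "homog J (card ({1} - {}) + t) ((ps ! i) {{}})" unfolding gr_def by (erule_tac x="{}" in allE) simp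
    then show "homog J (t + 1) (g i)" by (simp add: g_def)
  qed
  have basis: "is_basis J b Idx"
  proof (rule basis_from_span)
    show "finite Idx" by (simp add: Idx_eq)
    have "card Idx = card (Inl ` ({..<m} \<times> {..<4}) :: (nat \<times> nat + nat \<times> nat) set) +
        card (Inr ` ({..<2^t} \<times> {..<2}) :: (nat \<times> nat + nat \<times> nat) set)"
      unfolding Idx_eq by (rule card_Un_disjoint) auto
    also have "\<dots> = m * 4 + 2 ^ t * 2" by (simp add: card_image card_cartesian_product)
    also have "\<dots> = 2 ^ card J" using cnt lp by (simp add: m_def J_def kt n_def)
    finally show "card Idx = 2 ^ card J" .
    show "finite J" by (rule fJ)
    show "in_M J (b x)" if x: "x \<in> Idx" for x
    proof -
      from x consider (l) a n' where "x = Inl (a, n')" "a < m" "n' < 4"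
        | (r) i e where "x = Inr (i, e)" "i < 2 ^ t" "e < (2::nat)" by (auto simp: Idx_def)
      then show ?thesis
      proof cases
        case l
        then have "fs ! a \<in> set fs" by (simp add: m_def)
        then show ?thesis using l fM lam_act_M by (simp add: b_def f_def)
      next
        case r
        have e: "in_M {1} {{}}" by (simp add: in_M_def)
        have "in_M J (g i)" unfolding g_def by (rule hom_M[OF hom[OF psi[OF r(2)]] e])
        then show ?thesis using r Qop_M by (simp add: b_def)
      qed
    qed
    have gs: "gens J {1} fs ps \<subseteq> spn (b ` Idx)"
    proof
      fix x assume "x \<in> gens J {1} fs ps"
      then consider (a) f' n' where "f' \<in> set fs" "n' < 4" "x = lam_act J n' f'"
        | (b) \<phi> I where "\<phi> \<in> set ps" "I \<subseteq> {1}" "x = \<phi> {I}" by (auto simp: gens_def)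
      then show "x \<in> spn (b ` Idx)"
      proof cases
        case a
        then obtain a where "a < m" "f' = fs ! a" by (auto simp: in_set_conv_nth m_def)
        then have "x = b (Inl (a, n'))" "Inl (a, n') \<in> Idx" using a by (auto simp: b_def f_def Idx_def)
        then show ?thesis by (intro spn_base) blast
      next
        case b
        then obtain i where i: "i < 2 ^ t" "\<phi> = ps ! i" by (auto simp: in_set_conv_nth lp)
        from b(2) have "I = {} \<or> I = {1}" by (rule Pow1)
        then have "x = b (Inr (i, if I = {} then 0 else 1))" using b i Q1[OF i(1)]
          by (auto simp: b_def g_def)
        moreover have "Inr (i, if I = {} then 0 else 1) \<in> Idx" using i by (auto simp: Idx_def)
        ultimately show ?thesis by (intro spn_base) blast
      qed
    qed
    show "v \<in> spn (b ` Idx)" if "in_M J v" for v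
    proof -
      have "{I} \<in> spn (b ` Idx)" if "I \<subseteq> J" for I
        using d that gs spn_sub[OF gs] by (auto simp: decomp_def)
      then show ?thesis using spn_all[OF fJ] \<open>in_M J v\<close> by blast
    qed
  qed
  show ?thesis
    apply (rule exI[of _ m], rule exI[of _ f], rule exI[of _ g])
    apply (rule conjI)
     apply (insert part1, unfold J_def, assumption)
    apply (insert basis, unfold J_def b_def Idx_def, assumption)
    done
qed

lemma even_case:
  fixes k t :: nat
  assumes kt: "k = 2 * t" and t1: "t \<ge> 1"
  shows "\<exists>(m::nat) (f::nat \<Rightarrow> vec) (\<phi>::nat \<Rightarrow> vec \<Rightarrow> vec).
        (\<forall>i < 2 ^ (t - 1). is_hom {1, 2} {1..k} (\<phi> i)
             \<and> homog {1..k} (t + 1) (\<phi> i {{}})) \<and>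
        is_basis {1..k}
          (\<lambda>x. case x of Inl (a, n) \<Rightarrow> lam_act {1..k} n (f a)
                        | Inr (i, I) \<Rightarrow> \<phi> i {I})
          ({Inl (a, n) | a n. a < m \<and> n < 4} \<union>
           {Inr (i, I) | i I. i < 2 ^ (t - 1) \<and> I \<subseteq> {1, 2}})"
proof -
  define n where "n = 2 * t - 1"
  define fs where "fs = fst (dat n)"
  define ps where "ps = snd (dat n)"
  define J where "J = {1..k}"
  have I: "dinv n" by (rule dinv_all)
  have Sn: "Sn n = {1,2}" using t1 by (simp add: Sn_def n_def)
  have Jn: "{1..n+1} = J" using t1 by (simp add: J_def kt n_def)
  have nd: "n div 2 = t - 1" using t1 by (simp add: n_def)
  have n1: "n + 1 = k" using t1 by (simp add: n_def kt)
  have d: "decomp J {1,2} fs ps" and gph: "\<forall>\<phi>\<in>set ps. gr {1,2} J (t - 1) \<phi>"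
    and lp: "length ps = 2 ^ (t - 1)" and cnt: "4 * length fs + 4 * length ps = 2 ^ k"
    using I Sn Jn nd n1 by (auto simp: dinv_def fs_def ps_def)
  have fJ: "finite J" by (simp add: J_def)
  have hom: "is_hom {1,2} J \<phi>" if "\<phi> \<in> set ps" for \<phi> using d that by (simp add: decomp_def)
  have fM: "in_M J f" if "f \<in> set fs" for f using d that by (simp add: decomp_def)
  define m where "m = length fs"
  define f where "f = (\<lambda>a. fs ! a)"
  define \<phi> where "\<phi> = (\<lambda>i. ps ! i)"
  define b where "b = (\<lambda>x::(nat \<times> nat + nat \<times> nat set). case x of Inl (a, n) \<Rightarrow> lam_act J n (f a)
                        | Inr (i, I) \<Rightarrow> \<phi> i {I})"
  define Idx :: "(nat \<times> nat + nat \<times> nat set) set" where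
    "Idx = {Inl (a, n) | a n. a < m \<and> n < 4} \<union> {Inr (i, I) | i I. i < 2 ^ (t - 1) \<and> I \<subseteq> {1, 2}}"
  have Idx_eq: "Idx = Inl ` ({..<m} \<times> {..<4}) \<union> Inr ` ({..<2^(t-1)} \<times> Pow {1,2})"
    unfolding Idx_def by auto
  have psi: "ps ! i \<in> set ps" if "i < 2 ^ (t - 1)" for i using lp that by simp
  have part1: "\<forall>i < 2 ^ (t - 1). is_hom {1, 2} J (\<phi> i) \<and> homog J (t + 1) (\<phi> i {{}})"
  proof (intro allI impI conjI)
    fix i :: nat assume i: "i < 2 ^ (t - 1)"
    show "is_hom {1, 2} J (\<phi> i)" using hom psi[OF i] by (simp add: \<phi>_def)
    have "gr {1,2} J (t - 1) (ps ! i)" using gph psi[OF i] by blast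
    then have "homog J (card ({1,2::nat} - {}) + (t - 1)) ((ps ! i) {{}})" unfolding gr_def
      by (erule_tac x="{}" in allE) simp
    then show "homog J (t + 1) (\<phi> i {{}})" using t1 by (simp add: \<phi>_def)
  qed
  have basis: "is_basis J b Idx"
  proof (rule basis_from_span)
    show "finite Idx" by (simp add: Idx_eq)
    have "card Idx = card (Inl ` ({..<m} \<times> {..<4}) :: (nat \<times> nat + nat \<times> nat set) set) +
        card (Inr ` ({..<2^(t-1)} \<times> Pow {1,2}) :: (nat \<times> nat + nat \<times> nat set) set)"
      unfolding Idx_eq by (rule card_Un_disjoint) auto
    also have "\<dots> = m * 4 + 2 ^ (t - 1) * 4" by (simp add: card_image card_cartesian_product card_Pow)
    also have "\<dots> = 2 ^ card J" using cnt lp by (simp add: m_def J_def)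
    finally show "card Idx = 2 ^ card J" .
    show "finite J" by (rule fJ)
    show "in_M J (b x)" if x: "x \<in> Idx" for x
    proof -
      from x consider (l) a n' where "x = Inl (a, n')" "a < m" "n' < 4"
        | (r) i I where "x = Inr (i, I)" "i < 2 ^ (t - 1)" "I \<subseteq> {1,2}" by (auto simp: Idx_def)
      then show ?thesis
      proof cases
        case l
        then have "fs ! a \<in> set fs" by (simp add: m_def)
        then show ?thesis using l fM lam_act_M by (simp add: b_def f_def)
      next
        case r
        have e: "in_M {1,2} {I}" using r by (simp add: in_M_def)
        have "in_M J (\<phi> i {I})" unfolding \<phi>_def by (rule hom_M[OF hom[OF psi[OF r(2)]] e])
        then show ?thesis using r by (simp add: b_def)
      qed
    qed
    have gs: "gens J {1,2} fs ps \<subseteq> spn (b ` Idx)"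
    proof
      fix x assume "x \<in> gens J {1,2} fs ps"
      then consider (a) f' n' where "f' \<in> set fs" "n' < 4" "x = lam_act J n' f'"
        | (b) \<psi> I where "\<psi> \<in> set ps" "I \<subseteq> {1,2}" "x = \<psi> {I}" by (auto simp: gens_def)
      then show "x \<in> spn (b ` Idx)"
      proof cases
        case a
        then obtain a where "a < m" "f' = fs ! a" by (auto simp: in_set_conv_nth m_def)
        then have "x = b (Inl (a, n'))" "Inl (a, n') \<in> Idx" using a by (auto simp: b_def f_def Idx_def)
        then show ?thesis by (intro spn_base) blast
      next
        case b
        then obtain i where i: "i < 2 ^ (t - 1)" "\<psi> = ps ! i" by (auto simp: in_set_conv_nth lp)
        then have "x = b (Inr (i, I))" "Inr (i, I) \<in> Idx" using b by (auto simp: b_def \<phi>_def Idx_def)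
        then show ?thesis by (intro spn_base) blast
      qed
    qed
    show "v \<in> spn (b ` Idx)" if "in_M J v" for v
    proof -
      have "{I} \<in> spn (b ` Idx)" if "I \<subseteq> J" for I
        using d that gs spn_sub[OF gs] by (auto simp: decomp_def)
      then show ?thesis using spn_all[OF fJ] \<open>in_M J v\<close> by blast
    qed
  qed
  show ?thesis
    apply (rule exI[of _ m], rule exI[of _ f], rule exI[of _ \<phi>])
    apply (rule conjI)
     apply (insert part1, unfold J_def, assumption)
    apply (insert basis, unfold J_def b_def Idx_def, assumption)
    done
qed

theorem mainTheorem7:
  fixes k t :: nat
  assumes "k \<ge> 1"
  shows
  "(k = 2 * t + 1 \<longrightarrow>
     (\<exists>(m::nat) (f::nat \<Rightarrow> vec) (g::nat \<Rightarrow> vec).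
        (\<forall>i < 2 ^ t. Pop {1..k} (g i) = vzero \<and> homog {1..k} (t + 1) (g i)) \<and>
        is_basis {1..k}
          (\<lambda>x. case x of Inl (a, n) \<Rightarrow> lam_act {1..k} n (f a)
                        | Inr (i, e) \<Rightarrow> (if e = 0 then g i else Qop {1..k} (g i)))
          ({Inl (a, n) | a n. a < m \<and> n < 4} \<union> {Inr (i, e) | i (e::nat). i < 2 ^ t \<and> e < 2})))
   \<and>
   (k = 2 * t \<and> t \<ge> 1 \<longrightarrow>
     (\<exists>(m::nat) (f::nat \<Rightarrow> vec) (\<phi>::nat \<Rightarrow> vec \<Rightarrow> vec).
        (\<forall>i < 2 ^ (t - 1). is_hom {1, 2} {1..k} (\<phi> i)
             \<and> homog {1..k} (t + 1) (\<phi> i {{}})) \<and>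
        is_basis {1..k}
          (\<lambda>x. case x of Inl (a, n) \<Rightarrow> lam_act {1..k} n (f a)
                        | Inr (i, I) \<Rightarrow> \<phi> i {I})
          ({Inl (a, n) | a n. a < m \<and> n < 4} \<union>
           {Inr (i, I) | i I. i < 2 ^ (t - 1) \<and> I \<subseteq> {1, 2}})))"
  using odd_case[of k t] even_case[of k t] by blast

end
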